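(* Let $W$ be a central type and let $t$ be a closed expression with $\vdash t:W$ in $\mathcal{L}$ (the rule (struct) may be used). For all values $v$ and lists of resources $l,l'$, if $\langle t\mid\star\mid l\rangle^+\rightsquigarrow^*\langle v\mid\star\mid l'\rangle^{\varepsilon}$ for some polarity $\varepsilon$, then there exists a permutation $\sigma$ such that $l'=\sigma(l)$ (i.e. $l'$ is obtained by reordering the elements of $l$).
   Context: Polarities are $\varepsilon\in\{+,-\}$. Types: positive $P,Q ::= R \mid 1 \mid A\otimes B \mid A\oplus B$; negative $N,M ::= A\multimap B \mid A\,\&\,B$; $\varpi(P)=+$, $\varpi(N)=-$ ($R$ is an atomic type of resources). Central types are $W ::= 1\mid W\otimes W'\mid W\oplus W'$. Fix variables and resource constants $r_n$ ($n\in\mathbb N$). Expressions $t,u$ and values $v,w$: $t,u ::= v \mid (\mathrm{let}\ x^+=t\ \mathrm{in}\ u)^+ \mid (\mathrm{let}\ x^-=v\ \mathrm{in}\ u)^+ \mid \delta(v,(x,y).t)^+ \mid \delta(v,().t)^+ \mid \delta(v,x.t,y.u)^+ \mid (v\,w)^+ \mid (\pi_1 v)^+ \mid (\pi_2 v)^+$; $v,w ::= (\mathrm{let}\ x^+=t\ \mathrm{in}\ v)^- \mid (\mathrm{let}\ x^-=v\ \mathrm{in}\ w)^- \mid \delta(v,(x,y).w)^- \mid \delta(v,().w)^- \mid \delta(v,x.w,y.w')^- \mid (v\,w)^- \mid (\pi_1 v)^- \mid (\pi_2 v)^- \mid x \mid \mathrm{new} \mid \mathrm{delete} \mid (v,w)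 \mid () \mid \iota_1 v \mid \iota_2 v \mid \lambda x.t \mid \langle t,u\rangle \mid r_n$. $t[v/x]$ is capture-avoiding substitution. Contexts are finite lists of typed variables. Typing rules of $\mathcal{L}$ ($v,w$ range over values): (var) $x:A\vdash x:A$. (struct) from $\Gamma\vdash t:A$ and a type-preserving bijection $\sigma$ from entries of $\Gamma$ to entries of $\Gamma'$ (permutation plus renaming) derive $\Gamma'\vdash t[\sigma]:A$. $\vdash\mathrm{new}:1\multimap(R\oplus 1)$; $\vdash\mathrm{delete}:R\multimap 1$. (let) from $\Delta\vdash t:A$, $\Gamma,x:A\vdash u:B$ derive $\Gamma,\Delta\vdash(\mathrm{let}\ x^{\varpi(A)}=t\ \mathrm{in}\ u)^{\varpi(B)}:B$. From $\Gamma\vdash v:A$, $\Delta\vdash w:B$ derive $\Gamma,\Delta\vdash(v,w):A\otimes B$; from $\Delta\vdash v:A\otimes B$, $\Gamma,x:A,y:B,\Gamma'\vdash t:C$ derive $\Gamma,\Delta,\Gamma'\vdash\delta(v,(x,y).t)^{\varpi(C)}:C$. $\vdash():1$; from $\Delta\vdash v:1$, $\Gamma,\Gamma'\vdash t:A$ derive $\Gamma,\Delta,\Gamma'\vdash\delta(v,().t)^{\varpi(A)}:A$. From $\Gamma\vdash v:A$ derive $\Gamma\vdash\iota_1v:A\oplus B$; from $\Gamma\vdash v:B$ derive $\Gamma\vdash\iota_2v:A\oplus B$; from $\Delta\vdash v:A\oplus B$, $\Gamma,x:A,\Gamma'\vdash t:C$, $\Gamma,y:B,\Gamma'\vdash u:C$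 derive $\Gamma,\Delta,\Gamma'\vdash\delta(v,x.t,y.u)^{\varpi(C)}:C$. From $x:A,\Gamma\vdash t:B$ derive $\Gamma\vdash\lambda x.t:A\multimap B$; from $\Gamma\vdash w:A$, $\Delta\vdash v:A\multimap B$ derive $\Gamma,\Delta\vdash(v\,w)^{\varpi(B)}:B$. From $\Gamma\vdash t:A$, $\Gamma\vdash u:B$ derive $\Gamma\vdash\langle t,u\rangle:A\&B$; from $\Gamma\vdash v:A_1\&A_2$ derive $\Gamma\vdash(\pi_iv)^{\varpi(A_i)}:A_i$. Machine: stacks $s ::= \star \mid v^\varepsilon\cdot s \mid \pi_i^\varepsilon\cdot s \mid (x^+.u)^\varepsilon\cdot s$; lists of resources $l ::= []\mid r_n::l$ (the freelist); commands $\langle t\mid s\mid l\rangle^\varepsilon$; $\rightsquigarrow^*$ is the reflexive-transitive closure of the one-step reduction $\rightsquigarrow$ given by ($i\in\{1,2\}$): $\langle(\mathrm{let}\ x^-=v\ \mathrm{in}\ t)^\varepsilon\mid s\mid l\rangle^\varepsilon\rightsquigarrow\langle t[v/x]\mid s\mid l\rangle^\varepsilon$; $\langle(\mathrm{let}\ x^+=t\ \mathrm{in}\ u)^\varepsilon\mid s\mid l\rangle^\varepsilon\rightsquigarrow\langle t\mid (x^+.u)^\varepsilon\cdot s\mid l\rangle^+$; $\langle v\mid (x^+.t)^\varepsilon\cdot s\mid l\rangle^+\rightsquigarrow\langle t[v/x]\mid s\mid l\rangle^\varepsilon$; $\langle (v\,w)^\varepsilon\mid s\mid l\rangle^\varepsilon\rightsquigarrow\langle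 v\mid w^\varepsilon\cdot s\mid l\rangle^-$; $\langle \lambda x.t\mid v^\varepsilon\cdot s\mid l\rangle^-\rightsquigarrow\langle t[v/x]\mid s\mid l\rangle^\varepsilon$; $\langle (\pi_i v)^\varepsilon\mid s\mid l\rangle^\varepsilon\rightsquigarrow\langle v\mid \pi_i^\varepsilon\cdot s\mid l\rangle^-$; $\langle \langle t_1,t_2\rangle\mid \pi_i^\varepsilon\cdot s\mid l\rangle^-\rightsquigarrow\langle t_i\mid s\mid l\rangle^\varepsilon$; $\langle \delta((v,w),(x,y).t)^\varepsilon\mid s\mid l\rangle^\varepsilon\rightsquigarrow\langle t[v/x,w/y]\mid s\mid l\rangle^\varepsilon$; $\langle \delta((),().t)^\varepsilon\mid s\mid l\rangle^\varepsilon\rightsquigarrow\langle t\mid s\mid l\rangle^\varepsilon$; $\langle \delta(\iota_i v,x_1.t_1,x_2.t_2)^\varepsilon\mid s\mid l\rangle^\varepsilon\rightsquigarrow\langle t_i[v/x_i]\mid s\mid l\rangle^\varepsilon$; $\langle \mathrm{new}\mid ()^{\varepsilon}\cdot s\mid r_n::l\rangle^-\rightsquigarrow\langle \iota_1 r_n\mid s\mid l\rangle^+$; $\langle \mathrm{new}\mid ()^{\varepsilon}\cdot s\mid []\rangle^-\rightsquigarrow\langle \iota_2 ()\mid s\mid []\rangle^+$; $\langle \mathrm{delete}\mid r_n^{\varepsilon}\cdot s\mid l\rangle^-\rightsquigarrow\langle ()\mid s\mid r_n::l\rangle^+$. *)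

theory Defs
  imports Main "HOL-Combinatorics.Permutations"
begin

datatype pol = Pos | Neg

datatype ty = TR | TOne | TTensor ty ty | TPlus ty ty | TLolli ty ty | TWith ty ty

fun polty :: "ty \<Rightarrow> pol" where
  "polty TR = Pos" | "polty TOne = Pos" | "polty (TTensor _ _) = Pos" | "polty (TPlus _ _) = Pos"
| "polty (TLolli _ _) = Neg" | "polty (TWith _ _) = Neg"

inductive central :: "ty \<Rightarrow> bool" where
  "central TOne"
| "central W \<Longrightarrow> central W' \<Longrightarrow> central (TTensor W W')"
| "central W \<Longrightarrow> central W' \<Longrightarrow> central (TPlus W W')"

section \<open>Raw syntax (one datatype with polarity tags; the grammar is carved out by is_exp / is_val)\<close>

type_synonym vname = nat

datatype tm =
    Var vname
  | New
  | Delete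
  | Pair tm tm
  | Unit
  | Inj1 tm | Inj2 tm
  | Lam vname tm
  | WPair tm tm
  | Res nat
  | Let pol vname tm tm pol           (* (let x^p = t in u)^q *)
  | DTens tm vname vname tm pol       (* delta(v,(x,y).t)^q *)
  | DOne tm tm pol                    (* delta(v,().t)^q *)
  | DSum tm vname tm vname tm pol     (* delta(v,x.t,y.u)^q *)
  | App tm tm pol
  | Proj nat tm pol                   (* (pi_i v)^q, i in {1,2} *)

inductive is_exp :: "tm \<Rightarrow> bool" and is_val :: "tm \<Rightarrow> bool" where
  "is_val v \<Longrightarrow> is_exp v"
| "is_exp t \<Longrightarrow> is_exp u \<Longrightarrow> is_exp (Let Pos x t u Pos)"
| "is_val v \<Longrightarrow> is_exp u \<Longrightarrow> is_exp (Let Neg x v u Pos)"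
| "is_val v \<Longrightarrow> is_exp t \<Longrightarrow> is_exp (DTens v x y t Pos)"
| "is_val v \<Longrightarrow> is_exp t \<Longrightarrow> is_exp (DOne v t Pos)"
| "is_val v \<Longrightarrow> is_exp t \<Longrightarrow> is_exp u \<Longrightarrow> is_exp (DSum v x t y u Pos)"
| "is_val v \<Longrightarrow> is_val w \<Longrightarrow> is_exp (App v w Pos)"
| "i \<in> {1,2} \<Longrightarrow> is_val v \<Longrightarrow> is_exp (Proj i v Pos)"
| "is_exp t \<Longrightarrow> is_val v \<Longrightarrow> is_val (Let Pos x t v Neg)"
| "is_val v \<Longrightarrow> is_val w \<Longrightarrow> is_val (Let Neg x v w Neg)"
| "is_val v \<Longrightarrow> is_val w \<Longrightarrow> is_val (DTens v x y w Neg)"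
| "is_val v \<Longrightarrow> is_val w \<Longrightarrow> is_val (DOne v w Neg)"
| "is_val v \<Longrightarrow> is_val w \<Longrightarrow> is_val w' \<Longrightarrow> is_val (DSum v x w y w' Neg)"
| "is_val v \<Longrightarrow> is_val w \<Longrightarrow> is_val (App v w Neg)"
| "i \<in> {1,2} \<Longrightarrow> is_val v \<Longrightarrow> is_val (Proj i v Neg)"
| "is_val (Var x)"
| "is_val New"
| "is_val Delete"
| "is_val v \<Longrightarrow> is_val w \<Longrightarrow> is_val (Pair v w)"
| "is_val Unit"
| "is_val v \<Longrightarrow> is_val (Inj1 v)"
| "is_val v \<Longrightarrow> is_val (Inj2 v)"
| "is_exp t \<Longrightarrow> is_val (Lam x t)"
| "is_exp t \<Longrightarrow> is_exp u \<Longrightarrow> is_val (WPair t u)"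
| "is_val (Res n)"

fun fv :: "tm \<Rightarrow> vname set" where
  "fv (Var x) = {x}"
| "fv New = {}"
| "fv Delete = {}"
| "fv (Pair v w) = fv v \<union> fv w"
| "fv Unit = {}"
| "fv (Inj1 v) = fv v"
| "fv (Inj2 v) = fv v"
| "fv (Lam x t) = fv t - {x}"
| "fv (WPair t u) = fv t \<union> fv u"
| "fv (Res n) = {}"
| "fv (Let p x t u q) = fv t \<union> (fv u - {x})"
| "fv (DTens v x y t q) = fv v \<union> (fv t - {x, y})"
| "fv (DOne v t q) = fv v \<union> fv t"
| "fv (DSum v x t y u q) = fv v \<union> (fv t - {x}) \<union> (fv u - {y})"
| "fv (App v w q) = fv v \<union> fv w"
| "fv (Proj i v q) = fv v"

text \<open>A substitution is a partial map from variables to terms.  At a binder x we keep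
  the name x if it cannot capture anything, otherwise we rename it to a fresh name.\<close>

definition img :: "(vname \<Rightarrow> tm option) \<Rightarrow> vname \<Rightarrow> vname set" where
  "img m y = (case m y of Some u \<Rightarrow> fv u | None \<Rightarrow> {y})"

definition avoid :: "(vname \<Rightarrow> tm option) \<Rightarrow> tm \<Rightarrow> vname set \<Rightarrow> vname set" where
  "avoid m t X = (\<Union>y\<in>fv t - X. img m y)"

definition pick :: "vname set \<Rightarrow> vname \<Rightarrow> vname" where
  "pick S x = (if x \<notin> S then x else (LEAST n. n \<notin> S))"

fun substm :: "(vname \<Rightarrow> tm option) \<Rightarrow> tm \<Rightarrow> tm" where
  "substm m (Var y) = (case m y of Some u \<Rightarrow> u | None \<Rightarrow> Var y)"
| "substm m New = New"
| "substm m Delete = Delete"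
| "substm m (Pair v w) = Pair (substm m v) (substm m w)"
| "substm m Unit = Unit"
| "substm m (Inj1 v) = Inj1 (substm m v)"
| "substm m (Inj2 v) = Inj2 (substm m v)"
| "substm m (Lam x t) =
     (let z = pick (avoid m t {x}) x in Lam z (substm (m(x \<mapsto> Var z)) t))"
| "substm m (WPair t u) = WPair (substm m t) (substm m u)"
| "substm m (Res n) = Res n"
| "substm m (Let p x t u q) =
     (let z = pick (avoid m u {x}) x in Let p z (substm m t) (substm (m(x \<mapsto> Var z)) u) q)"
| "substm m (DTens v x y t q) =
     (let S = avoid m t {x, y}; z1 = pick S x; z2 = pick (insert z1 S) y
      in DTens (substm m v) z1 z2 (substm (m(x \<mapsto> Var z1, y \<mapsto> Var z2)) t) q)"
| "substm m (DOne v t q) = DOne (substm m v) (substm m t) q"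
| "substm m (DSum v x t y u q) =
     (let z1 = pick (avoid m t {x}) x; z2 = pick (avoid m u {y}) y
      in DSum (substm m v) z1 (substm (m(x \<mapsto> Var z1)) t) z2 (substm (m(y \<mapsto> Var z2)) u) q)"
| "substm m (App v w q) = App (substm m v) (substm m w) q"
| "substm m (Proj i v q) = Proj i (substm m v) q"

definition subst1 :: "tm \<Rightarrow> tm \<Rightarrow> vname \<Rightarrow> tm" where
  "subst1 t v x = substm [x \<mapsto> v] t"

definition subst2 :: "tm \<Rightarrow> tm \<Rightarrow> vname \<Rightarrow> tm \<Rightarrow> vname \<Rightarrow> tm" where
  "subst2 t v x w y = substm [x \<mapsto> v, y \<mapsto> w] t"

type_synonym ctx = "(vname \<times> ty) list"

definition dom_ctx :: "ctx \<Rightarrow> vname list" where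
  "dom_ctx \<Gamma> = map fst \<Gamma>"

inductive typing :: "ctx \<Rightarrow> tm \<Rightarrow> ty \<Rightarrow> bool" where
  t_var: "typing [(x, A)] (Var x) A"
| t_struct: "typing \<Gamma> t A \<Longrightarrow> distinct (dom_ctx \<Gamma>') \<Longrightarrow>
     mset (map (\<lambda>(y, B). (f y, B)) \<Gamma>) = mset \<Gamma>' \<Longrightarrow>
     typing \<Gamma>' (substm (\<lambda>y. if y \<in> set (dom_ctx \<Gamma>) then Some (Var (f y)) else None) t) A"
| t_new: "typing [] New (TLolli TOne (TPlus TR TOne))"
| t_delete: "typing [] Delete (TLolli TR TOne)"
| t_let: "typing \<Delta> t A \<Longrightarrow> typing (\<Gamma> @ [(x, A)]) u B \<Longrightarrow> distinct (dom_ctx (\<Gamma> @ \<Delta>)) \<Longrightarrow>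
     typing (\<Gamma> @ \<Delta>) (Let (polty A) x t u (polty B)) B"
| t_pair: "is_val v \<Longrightarrow> is_val w \<Longrightarrow> typing \<Gamma> v A \<Longrightarrow> typing \<Delta> w B \<Longrightarrow>
     distinct (dom_ctx (\<Gamma> @ \<Delta>)) \<Longrightarrow> typing (\<Gamma> @ \<Delta>) (Pair v w) (TTensor A B)"
| t_dtens: "is_val v \<Longrightarrow> typing \<Delta> v (TTensor A B) \<Longrightarrow>
     typing (\<Gamma> @ [(x, A), (y, B)] @ \<Gamma>') t C \<Longrightarrow> distinct (dom_ctx (\<Gamma> @ \<Delta> @ \<Gamma>')) \<Longrightarrow>
     typing (\<Gamma> @ \<Delta> @ \<Gamma>') (DTens v x y t (polty C)) C"
| t_unit: "typing [] Unit TOne"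
| t_done: "is_val v \<Longrightarrow> typing \<Delta> v TOne \<Longrightarrow> typing (\<Gamma> @ \<Gamma>') t A \<Longrightarrow>
     distinct (dom_ctx (\<Gamma> @ \<Delta> @ \<Gamma>')) \<Longrightarrow>
     typing (\<Gamma> @ \<Delta> @ \<Gamma>') (DOne v t (polty A)) A"
| t_inj1: "is_val v \<Longrightarrow> typing \<Gamma> v A \<Longrightarrow> typing \<Gamma> (Inj1 v) (TPlus A B)"
| t_inj2: "is_val v \<Longrightarrow> typing \<Gamma> v B \<Longrightarrow> typing \<Gamma> (Inj2 v) (TPlus A B)"
| t_dsum: "is_val v \<Longrightarrow> typing \<Delta> v (TPlus A B) \<Longrightarrow>
     typing (\<Gamma> @ [(x, A)] @ \<Gamma>') t C \<Longrightarrow> typing (\<Gamma> @ [(y, B)] @ \<Gamma>') u C \<Longrightarrow>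
     distinct (dom_ctx (\<Gamma> @ \<Delta> @ \<Gamma>')) \<Longrightarrow>
     typing (\<Gamma> @ \<Delta> @ \<Gamma>') (DSum v x t y u (polty C)) C"
| t_lam: "typing ((x, A) # \<Gamma>) t B \<Longrightarrow> typing \<Gamma> (Lam x t) (TLolli A B)"
| t_app: "is_val w \<Longrightarrow> is_val v \<Longrightarrow> typing \<Gamma> w A \<Longrightarrow> typing \<Delta> v (TLolli A B) \<Longrightarrow>
     distinct (dom_ctx (\<Gamma> @ \<Delta>)) \<Longrightarrow> typing (\<Gamma> @ \<Delta>) (App v w (polty B)) B"
| t_with: "typing \<Gamma> t A \<Longrightarrow> typing \<Gamma> u B \<Longrightarrow> typing \<Gamma> (WPair t u) (TWith A B)"
| t_proj1: "is_val v \<Longrightarrow> typing \<Gamma> v (TWith A1 A2) \<Longrightarrow> typing \<Gamma> (Proj 1 v (polty A1)) A1"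
| t_proj2: "is_val v \<Longrightarrow> typing \<Gamma> v (TWith A1 A2) \<Longrightarrow> typing \<Gamma> (Proj 2 v (polty A2)) A2"

datatype frame =
    FArg tm pol
  | FProj nat pol
  | FLet vname tm pol    (* (x^+.u)^eps *)

type_synonym stack = "frame list"   (* [] is the empty stack *)

text \<open>A resource r_n is represented by its index n; the freelist is a list of indices.
  A command <t | s | l>^eps is the tuple (t, s, l, eps).\<close>
type_synonym cmd = "tm \<times> stack \<times> nat list \<times> pol"

inductive step :: "cmd \<Rightarrow> cmd \<Rightarrow> bool" where
  s_letneg: "is_val v \<Longrightarrow> step (Let Neg x v t e, s, l, e) (subst1 t v x, s, l, e)"
| s_letpos: "step (Let Pos x t u e, s, l, e) (t, FLet x u e # s, l, Pos)"
| s_ret: "is_val v \<Longrightarrow> step (v, FLet x t e # s, l, Pos) (subst1 t v x, s, l, e)"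
| s_app: "is_val v \<Longrightarrow> is_val w \<Longrightarrow> step (App v w e, s, l, e) (v, FArg w e # s, l, Neg)"
| s_lam: "is_val v \<Longrightarrow> step (Lam x t, FArg v e # s, l, Neg) (subst1 t v x, s, l, e)"
| s_proj: "i \<in> {1,2} \<Longrightarrow> is_val v \<Longrightarrow> step (Proj i v e, s, l, e) (v, FProj i e # s, l, Neg)"
| s_with1: "step (WPair t1 t2, FProj 1 e # s, l, Neg) (t1, s, l, e)"
| s_with2: "step (WPair t1 t2, FProj 2 e # s, l, Neg) (t2, s, l, e)"
| s_tens: "is_val v \<Longrightarrow> is_val w \<Longrightarrow> step (DTens (Pair v w) x y t e, s, l, e) (subst2 t v x w y, s, l, e)"
| s_one: "step (DOne Unit t e, s, l, e) (t, s, l, e)"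
| s_sum1: "is_val v \<Longrightarrow> step (DSum (Inj1 v) x1 t1 x2 t2 e, s, l, e) (subst1 t1 v x1, s, l, e)"
| s_sum2: "is_val v \<Longrightarrow> step (DSum (Inj2 v) x1 t1 x2 t2 e, s, l, e) (subst1 t2 v x2, s, l, e)"
| s_new: "step (New, FArg Unit e # s, n # l, Neg) (Inj1 (Res n), s, l, Pos)"
| s_new_fail: "step (New, FArg Unit e # s, [], Neg) (Inj2 Unit, s, [], Pos)"
| s_delete: "step (Delete, FArg (Res n) e # s, l, Neg) (Unit, s, n # l, Pos)"

abbreviation steps :: "cmd \<Rightarrow> cmd \<Rightarrow> bool" where
  "steps \<equiv> step\<^sup>*\<^sup>*"

end

theory Submission
  imports Defs
begin

inductive rty :: "(vname \<rightharpoonup> ty) \<Rightarrow> nat multiset \<Rightarrow> tm \<Rightarrow> ty \<Rightarrow> bool" where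
  r_var: "rty [x \<mapsto> A] {#} (Var x) A"
| r_res: "rty Map.empty {#n#} (Res n) TR"
| r_new: "rty Map.empty {#} New (TLolli TOne (TPlus TR TOne))"
| r_delete: "rty Map.empty {#} Delete (TLolli TR TOne)"
| r_unit: "rty Map.empty {#} Unit TOne"
| r_let: "rty \<Delta> R1 t A \<Longrightarrow> rty (\<Gamma>(x \<mapsto> A)) R2 u B \<Longrightarrow> x \<notin> dom \<Gamma> \<Longrightarrow> dom \<Gamma> \<inter> dom \<Delta> = {} \<Longrightarrow>
    rty (\<Gamma> ++ \<Delta>) (R1 + R2) (Let (polty A) x t u (polty B)) B"
| r_pair: "rty \<Gamma> R1 v A \<Longrightarrow> rty \<Delta> R2 w B \<Longrightarrow> dom \<Gamma> \<inter> dom \<Delta> = {} \<Longrightarrow>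
    rty (\<Gamma> ++ \<Delta>) (R1 + R2) (Pair v w) (TTensor A B)"
| r_dtens: "rty \<Delta> R1 v (TTensor A B) \<Longrightarrow> rty (\<Gamma>(x \<mapsto> A, y \<mapsto> B)) R2 t C \<Longrightarrow> x \<notin> dom \<Gamma> \<Longrightarrow>
    y \<notin> dom \<Gamma> \<Longrightarrow> x \<noteq> y \<Longrightarrow> dom \<Gamma> \<inter> dom \<Delta> = {} \<Longrightarrow>
    rty (\<Gamma> ++ \<Delta>) (R1 + R2) (DTens v x y t (polty C)) C"
| r_done: "rty \<Delta> R1 v TOne \<Longrightarrow> rty \<Gamma> R2 t A \<Longrightarrow> dom \<Gamma> \<inter> dom \<Delta> = {} \<Longrightarrow>
    rty (\<Gamma> ++ \<Delta>) (R1 + R2) (DOne v t (polty A)) A"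
| r_inj1: "rty \<Gamma> R v A \<Longrightarrow> rty \<Gamma> R (Inj1 v) (TPlus A B)"
| r_inj2: "rty \<Gamma> R v B \<Longrightarrow> rty \<Gamma> R (Inj2 v) (TPlus A B)"
| r_dsum: "rty \<Delta> R1 v (TPlus A B) \<Longrightarrow> rty (\<Gamma>(x \<mapsto> A)) R2 t C \<Longrightarrow> rty (\<Gamma>(y \<mapsto> B)) R2 u C \<Longrightarrow>
    x \<notin> dom \<Gamma> \<Longrightarrow> y \<notin> dom \<Gamma> \<Longrightarrow> dom \<Gamma> \<inter> dom \<Delta> = {} \<Longrightarrow>
    rty (\<Gamma> ++ \<Delta>) (R1 + R2) (DSum v x t y u (polty C)) C"
| r_lam: "rty (\<Gamma>(x \<mapsto> A)) R t B \<Longrightarrow> x \<notin> dom \<Gamma> \<Longrightarrow> rty \<Gamma> R (Lam x t) (TLolli A B)"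
| r_app: "rty \<Gamma> R1 w A \<Longrightarrow> rty \<Delta> R2 v (TLolli A B) \<Longrightarrow> dom \<Gamma> \<inter> dom \<Delta> = {} \<Longrightarrow>
    rty (\<Gamma> ++ \<Delta>) (R1 + R2) (App v w (polty B)) B"
| r_with: "rty \<Gamma> R t A \<Longrightarrow> rty \<Gamma> R u B \<Longrightarrow> rty \<Gamma> R (WPair t u) (TWith A B)"
| r_proj1: "rty \<Gamma> R v (TWith A1 A2) \<Longrightarrow> rty \<Gamma> R (Proj 1 v (polty A1)) A1"
| r_proj2: "rty \<Gamma> R v (TWith A1 A2) \<Longrightarrow> rty \<Gamma> R (Proj 2 v (polty A2)) A2"

lemma finite_fv: "finite (fv t)"
  by (induction t) auto

lemma rty_fv: "rty \<Gamma> R t A \<Longrightarrow> fv t = dom \<Gamma>"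
  by (induction rule: rty.induct) (auto split: if_splits)

lemma rty_finite: "rty \<Gamma> R t A \<Longrightarrow> finite (dom \<Gamma>)"
  using rty_fv finite_fv by metis

definition sig :: "(vname \<Rightarrow> tm option) \<Rightarrow> vname \<Rightarrow> tm" where
  "sig m y = (case m y of Some u \<Rightarrow> u | None \<Rightarrow> Var y)"

lemma img_sig: "img m y = fv (sig m y)"
  by (cases "m y") (auto simp: img_def sig_def)

lemma finite_avoid: "finite (avoid m t X)"
  unfolding avoid_def img_sig by (intro finite_UN_I finite_Diff finite_fv)

lemma pick_notin: "finite S \<Longrightarrow> pick S x \<notin> S"
proof -
  assume f: "finite S"
  obtain n :: nat where "n \<notin> S" using ex_new_if_finite[OF infinite_UNIV_nat f] by blast
  then have "(LEAST n. n \<notin> S) \<notin> S" by (rule LeastI)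
  then show ?thesis unfolding pick_def by simp
qed

definition ctxspec :: "(vname \<rightharpoonup> ty) \<Rightarrow> (vname \<Rightarrow> (vname \<rightharpoonup> ty)) \<Rightarrow> (vname \<rightharpoonup> ty) \<Rightarrow> bool" where
  "ctxspec \<Gamma> D G \<longleftrightarrow> dom G = (\<Union>y\<in>dom \<Gamma>. dom (D y)) \<and> (\<forall>y\<in>dom \<Gamma>. D y \<subseteq>\<^sub>m G) \<and>
     (\<forall>y\<in>dom \<Gamma>. \<forall>y'\<in>dom \<Gamma>. y \<noteq> y' \<longrightarrow> dom (D y) \<inter> dom (D y') = {})"

definition substok :: "(vname \<Rightarrow> tm option) \<Rightarrow> (vname \<rightharpoonup> ty) \<Rightarrow> (vname \<Rightarrow> (vname \<rightharpoonup> ty)) \<Rightarrow> (vname \<Rightarrow> nat multiset) \<Rightarrow> bool" where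
  "substok m \<Gamma> D Rs \<longleftrightarrow> (\<forall>y A. \<Gamma> y = Some A \<longrightarrow> rty (D y) (Rs y) (sig m y) A)"

lemma ctxspec_split:
  assumes c: "ctxspec (\<Gamma> ++ \<Delta>) D G" and dj: "dom \<Gamma> \<inter> dom \<Delta> = {}"
  shows "ctxspec \<Gamma> D (G |` (\<Union>y\<in>dom \<Gamma>. dom (D y)))"
    and "ctxspec \<Delta> D (G |` (\<Union>y\<in>dom \<Delta>. dom (D y)))"
    and "G = (G |` (\<Union>y\<in>dom \<Gamma>. dom (D y))) ++ (G |` (\<Union>y\<in>dom \<Delta>. dom (D y)))"
    and "dom (G |` (\<Union>y\<in>dom \<Gamma>. dom (D y))) \<inter> dom (G |` (\<Union>y\<in>dom \<Delta>. dom (D y))) = {}"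
proof -
  have c': "dom G = (\<Union>y\<in>dom (\<Gamma> ++ \<Delta>). dom (D y)) \<and> (\<forall>y\<in>dom (\<Gamma> ++ \<Delta>). D y \<subseteq>\<^sub>m G) \<and>
     (\<forall>y\<in>dom (\<Gamma> ++ \<Delta>). \<forall>y'\<in>dom (\<Gamma> ++ \<Delta>). y \<noteq> y' \<longrightarrow> dom (D y) \<inter> dom (D y') = {})"
    using c unfolding ctxspec_def by assumption
  have du: "dom (\<Gamma> ++ \<Delta>) = dom \<Gamma> \<union> dom \<Delta>" by (rule dom_map_add[THEN trans], rule Un_commute)
  have d: "dom G = (\<Union>y\<in>dom \<Gamma> \<union> dom \<Delta>. dom (D y))" using c' unfolding du by (elim conjE)
  have le: "\<And>y. y \<in> dom \<Gamma> \<union> dom \<Delta> \<Longrightarrow> D y \<subseteq>\<^sub>m G" using c' unfolding du by (elim conjE) (rule bspec)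
  have pd: "\<And>y y'. y \<in> dom \<Gamma> \<union> dom \<Delta> \<Longrightarrow> y' \<in> dom \<Gamma> \<union> dom \<Delta> \<Longrightarrow> y \<noteq> y' \<Longrightarrow> dom (D y) \<inter> dom (D y') = {}"
    using c' unfolding du by metis
  have le': "\<And>y S. D y \<subseteq>\<^sub>m G \<Longrightarrow> dom (D y) \<subseteq> S \<Longrightarrow> D y \<subseteq>\<^sub>m G |` S"
    unfolding map_le_def by (metis restrict_in subsetD)
  have dr: "\<And>S. S \<subseteq> dom G \<Longrightarrow> dom (G |` S) = S" by (simp add: Int_absorb1)
  show "ctxspec \<Gamma> D (G |` (\<Union>y\<in>dom \<Gamma>. dom (D y)))"
    unfolding ctxspec_def
  proof (intro conjI ballI impI)
    show "dom (G |` (\<Union>y\<in>dom \<Gamma>. dom (D y))) = (\<Union>y\<in>dom \<Gamma>. dom (D y))"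
      by (rule dr) (unfold d, intro UN_mono, auto)
    show "D y \<subseteq>\<^sub>m G |` (\<Union>y\<in>dom \<Gamma>. dom (D y))" if "y \<in> dom \<Gamma>" for y
      using that by (intro le'[OF le]) auto
    show "dom (D y) \<inter> dom (D y') = {}" if "y \<in> dom \<Gamma>" "y' \<in> dom \<Gamma>" "y \<noteq> y'" for y y'
      using that by (intro pd) auto
  qed
  show "ctxspec \<Delta> D (G |` (\<Union>y\<in>dom \<Delta>. dom (D y)))"
    unfolding ctxspec_def
  proof (intro conjI ballI impI)
    show "dom (G |` (\<Union>y\<in>dom \<Delta>. dom (D y))) = (\<Union>y\<in>dom \<Delta>. dom (D y))"
      by (rule dr) (unfold d, intro UN_mono, auto)
    show "D y \<subseteq>\<^sub>m G |` (\<Union>y\<in>dom \<Delta>. dom (D y))" if "y \<in> dom \<Delta>" for y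
      using that by (intro le'[OF le]) auto
    show "dom (D y) \<inter> dom (D y') = {}" if "y \<in> dom \<Delta>" "y' \<in> dom \<Delta>" "y \<noteq> y'" for y y'
      using that by (intro pd) auto
  qed
  have dj2: "(\<Union>y\<in>dom \<Gamma>. dom (D y)) \<inter> (\<Union>y\<in>dom \<Delta>. dom (D y)) = {}"
  proof (rule ccontr)
    assume "\<not> ?thesis"
    then obtain z y y' where "y \<in> dom \<Gamma>" "y' \<in> dom \<Delta>" "z \<in> dom (D y)" "z \<in> dom (D y')" by blast
    moreover have "y \<noteq> y'" using dj calculation by blast
    ultimately show False using pd[of y y'] by blast
  qed
  show "G = (G |` (\<Union>y\<in>dom \<Gamma>. dom (D y))) ++ (G |` (\<Union>y\<in>dom \<Delta>. dom (D y)))"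
  proof
    fix z
    consider "z \<in> (\<Union>y\<in>dom \<Gamma>. dom (D y))" | "z \<in> (\<Union>y\<in>dom \<Delta>. dom (D y))" | "z \<notin> dom G"
      using d unfolding UN_Un by (metis Un_iff)
    then show "G z = ((G |` (\<Union>y\<in>dom \<Gamma>. dom (D y))) ++ (G |` (\<Union>y\<in>dom \<Delta>. dom (D y)))) z"
    proof cases
      case 1
      then have "z \<notin> (\<Union>y\<in>dom \<Delta>. dom (D y))" using dj2 by blast
      then show ?thesis using 1 by (simp add: map_add_def restrict_map_def)
    next
      case 2
      then show ?thesis by (simp add: map_add_def restrict_map_def split: option.splits)
    next
      case 3
      then show ?thesis by (simp add: map_add_def restrict_map_def domIff split: option.splits)
    qed
  qed
  show "dom (G |` (\<Union>y\<in>dom \<Gamma>. dom (D y))) \<inter> dom (G |` (\<Union>y\<in>dom \<Delta>. dom (D y))) = {}"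
  proof -
    have gen: "\<And>S T. S \<inter> T = {} \<Longrightarrow> dom (G |` S) \<inter> dom (G |` T) = {}" by auto
    show ?thesis by (rule gen[OF dj2])
  qed
qed

lemma substok_split:
  assumes "substok m (\<Gamma> ++ \<Delta>) D Rs" "dom \<Gamma> \<inter> dom \<Delta> = {}"
  shows "substok m \<Gamma> D Rs" "substok m \<Delta> D Rs"
proof -
  have "(\<Gamma> ++ \<Delta>) y = Some A" if "\<Gamma> y = Some A" for y A
  proof -
    have "y \<notin> dom \<Delta>" by (metis disjoint_iff domI that assms(2))
    then show ?thesis using that by (simp add: map_add_dom_app_simps(3))
  qed
  moreover have "(\<Gamma> ++ \<Delta>) y = Some A" if "\<Delta> y = Some A" for y A
    using that by (rule map_add_find_right)
  ultimately show "substok m \<Gamma> D Rs" "substok m \<Delta> D Rs"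
    using assms(1) unfolding substok_def by metis+
qed

lemma bind_ext:
  assumes s: "substok m \<Gamma> D Rs" and c: "ctxspec \<Gamma> D G" and x: "x \<notin> dom \<Gamma>" and z: "z \<notin> dom G"
  shows "substok (m(x\<mapsto>Var z)) (\<Gamma>(x\<mapsto>A)) (D(x:=[z\<mapsto>A])) (Rs(x:={#}))"
    and "ctxspec (\<Gamma>(x\<mapsto>A)) (D(x:=[z\<mapsto>A])) (G(z\<mapsto>A))"
proof -
  show "substok (m(x\<mapsto>Var z)) (\<Gamma>(x\<mapsto>A)) (D(x:=[z\<mapsto>A])) (Rs(x:={#}))"
    unfolding substok_def
  proof (intro allI impI)
    fix y B assume yB: "(\<Gamma>(x\<mapsto>A)) y = Some B"
    show "rty ((D(x:=[z\<mapsto>A])) y) ((Rs(x:={#})) y) (sig (m(x\<mapsto>Var z)) y) B"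
    proof (cases "y = x")
      case True
      then show ?thesis using yB by (simp add: sig_def r_var)
    next
      case False
      then have "\<Gamma> y = Some B" "sig (m(x\<mapsto>Var z)) y = sig m y" using yB by (simp_all add: sig_def)
      then show ?thesis using s False unfolding substok_def by simp
    qed
  qed
  have d: "dom G = (\<Union>y\<in>dom \<Gamma>. dom (D y))" and le: "\<And>y. y \<in> dom \<Gamma> \<Longrightarrow> D y \<subseteq>\<^sub>m G"
    and pd: "\<And>y y'. y \<in> dom \<Gamma> \<Longrightarrow> y' \<in> dom \<Gamma> \<Longrightarrow> y \<noteq> y' \<Longrightarrow> dom (D y) \<inter> dom (D y') = {}"
    using c unfolding ctxspec_def by blast+
  have zD: "\<And>y. y \<in> dom \<Gamma> \<Longrightarrow> z \<notin> dom (D y)"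
    using d z by blast
  have dx: "dom (\<Gamma>(x\<mapsto>A)) = insert x (dom \<Gamma>)" by simp
  show "ctxspec (\<Gamma>(x\<mapsto>A)) (D(x:=[z\<mapsto>A])) (G(z\<mapsto>A))"
    unfolding ctxspec_def dx
  proof (intro conjI ballI impI)
    have "(\<Union>y\<in>insert x (dom \<Gamma>). dom ((D(x := [z \<mapsto> A])) y)) = insert z (\<Union>y\<in>dom \<Gamma>. dom (D y))"
    proof -
      have "(\<Union>y\<in>dom \<Gamma>. dom ((D(x:=[z\<mapsto>A])) y)) = (\<Union>y\<in>dom \<Gamma>. dom (D y))"
        using x by (intro SUP_cong) auto
      then show ?thesis by simp
    qed
    then show "dom (G(z \<mapsto> A)) = (\<Union>y\<in>insert x (dom \<Gamma>). dom ((D(x := [z \<mapsto> A])) y))"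
      using d by simp
  next
    fix y assume y: "y \<in> insert x (dom \<Gamma>)"
    show "(D(x := [z \<mapsto> A])) y \<subseteq>\<^sub>m G(z \<mapsto> A)"
    proof (cases "y = x")
      case True then show ?thesis by (simp add: map_le_def)
    next
      case False
      then have "y \<in> dom \<Gamma>" using y by blast
      then have "D y \<subseteq>\<^sub>m G" "z \<notin> dom (D y)" using le zD by blast+
      then show ?thesis using False by (auto simp: map_le_def)
    qed
  next
    fix y y' assume y: "y \<in> insert x (dom \<Gamma>)" and y': "y' \<in> insert x (dom \<Gamma>)" and ne: "y \<noteq> y'"
    show "dom ((D(x := [z \<mapsto> A])) y) \<inter> dom ((D(x := [z \<mapsto> A])) y') = {}"
    proof (cases "y = x")
      case True
      then have "y' \<in> dom \<Gamma>" "y' \<noteq> x" using y' ne by auto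
      then show ?thesis using True zD by auto
    next
      case False
      note F = False
      show ?thesis
      proof (cases "y' = x")
        case True
        then have "y \<in> dom \<Gamma>" using y F by auto
        then show ?thesis using True F zD by auto
      next
        case False
        then show ?thesis using F y y' ne pd by auto
      qed
    qed
  qed
qed

lemma sum_ext:
  assumes "finite (dom \<Gamma>)" "x \<notin> dom \<Gamma>"
  shows "sum (Rs(x:={#})) (dom (\<Gamma>(x\<mapsto>A))) = sum Rs (dom \<Gamma>)"
proof -
  have "sum (Rs(x:={#})) (insert x (dom \<Gamma>)) = sum (Rs(x:={#})) (dom \<Gamma>)"
    using assms by (simp add: sum.insert)
  also have "\<dots> = sum Rs (dom \<Gamma>)"
    using assms by (intro sum.cong) auto
  finally show ?thesis by simp
qed

lemma avoid_eq:
  assumes "substok m \<Gamma> D Rs" "dom \<Gamma> = fv u - X"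
  shows "(\<Union>y\<in>dom \<Gamma>. dom (D y)) = avoid m u X"
proof -
  have "\<forall>y\<in>dom \<Gamma>. dom (D y) = fv (sig m y)"
  proof
    fix y assume "y \<in> dom \<Gamma>"
    then obtain A where "\<Gamma> y = Some A" by blast
    then have "rty (D y) (Rs y) (sig m y) A" using assms(1) unfolding substok_def by blast
    then show "dom (D y) = fv (sig m y)" by (simp add: rty_fv)
  qed
  then show ?thesis using assms(2) unfolding avoid_def img_sig by auto
qed


lemma split_all:
  assumes "substok m (\<Gamma> ++ \<Delta>) D Rs" "ctxspec (\<Gamma> ++ \<Delta>) D G" "dom \<Gamma> \<inter> dom \<Delta> = {}"
  obtains G1 G2 where "G = G1 ++ G2" "dom G1 \<inter> dom G2 = {}" "ctxspec \<Gamma> D G1" "ctxspec \<Delta> D G2"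
    "substok m \<Gamma> D Rs" "substok m \<Delta> D Rs"
proof -
  note cs = ctxspec_split[OF assms(2,3)]
  note ss = substok_split[OF assms(1,3)]
  show thesis
    by (rule that[OF cs(3) cs(4) cs(1) cs(2) ss(1) ss(2)])
qed

lemma fresh_dom:
  assumes "substok m \<Gamma> D Rs" "ctxspec \<Gamma> D G" "dom \<Gamma> = fv u - X"
  shows "dom G = avoid m u X"
proof -
  have "dom G = (\<Union>y\<in>dom \<Gamma>. dom (D y))" using assms(2) unfolding ctxspec_def by (elim conjE)
  then show ?thesis using avoid_eq[OF assms(1,3)] by simp
qed

lemma sum_split:
  assumes "finite (dom \<Gamma>)" "finite (dom \<Delta>)" "dom \<Gamma> \<inter> dom \<Delta> = {}"
  shows "sum Rs (dom (\<Gamma> ++ \<Delta>)) = sum Rs (dom \<Gamma>) + sum Rs (dom \<Delta>)"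
proof -
  have "sum Rs (dom \<Gamma> \<union> dom \<Delta>) = sum Rs (dom \<Gamma>) + sum Rs (dom \<Delta>)"
    using assms by (rule sum.union_disjoint)
  moreover have "dom (\<Gamma> ++ \<Delta>) = dom \<Gamma> \<union> dom \<Delta>" by (rule dom_map_add[THEN trans], rule Un_commute)
  ultimately show ?thesis by simp
qed

lemma le_dom_eq: "m1 \<subseteq>\<^sub>m m2 \<Longrightarrow> dom m2 = dom m1 \<Longrightarrow> m2 = m1"
proof
  fix z assume le: "m1 \<subseteq>\<^sub>m m2" and d: "dom m2 = dom m1"
  show "m2 z = m1 z"
  proof (cases "z \<in> dom m1")
    case True then show ?thesis using le unfolding map_le_def by simp
  next
    case False then have "z \<notin> dom m2" using d by simp
    then show ?thesis using False by (simp add: domIff)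
  qed
qed

lemma ctxspec_empty: "ctxspec Map.empty D G \<Longrightarrow> G = Map.empty"
  unfolding ctxspec_def by simp

lemma fin_upd: "finite (dom (\<Gamma>(x\<mapsto>A))) \<Longrightarrow> finite (dom \<Gamma>)"
  by simp

lemma fv_upd: "fv u = dom (\<Gamma>(x\<mapsto>A)) \<Longrightarrow> x \<notin> dom \<Gamma> \<Longrightarrow> dom \<Gamma> = fv u - {x}"
  by auto

lemma subst_lemma:
  assumes "rty \<Gamma> R t A"
  shows "substok m \<Gamma> D Rs \<Longrightarrow> ctxspec \<Gamma> D G \<Longrightarrow> rty G (R + sum Rs (dom \<Gamma>)) (substm m t) A"
  using assms
proof (induction arbitrary: m D Rs G rule: rty.induct)
  case (r_var x A)
  have s: "rty (D x) (Rs x) (sig m x) A" using r_var.prems(1) unfolding substok_def by simp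
  have "D x \<subseteq>\<^sub>m G" "dom G = dom (D x)" using r_var.prems(2) unfolding ctxspec_def by simp_all
  then have GD: "G = D x" by (rule le_dom_eq)
  have e1: "substm m (Var x) = sig m x" by (simp add: sig_def)
  have e2: "{#} + sum Rs (dom [x\<mapsto>A]) = Rs x" by simp
  show ?case unfolding e1 e2 GD by (rule s)
next
  case (r_res n)
  then show ?case using ctxspec_empty[OF r_res.prems(2)] by (simp add: rty.r_res)
next
  case r_new
  then show ?case using ctxspec_empty[OF r_new.prems(2)] by (simp add: rty.r_new)
next
  case r_delete
  then show ?case using ctxspec_empty[OF r_delete.prems(2)] by (simp add: rty.r_delete)
next
  case r_unit
  then show ?case using ctxspec_empty[OF r_unit.prems(2)] by (simp add: rty.r_unit)
next
  case (r_let \<Delta> R1 t A \<Gamma> x R2 u B)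
  obtain G1 G2 where G: "G = G1 ++ G2" "dom G1 \<inter> dom G2 = {}" "ctxspec \<Gamma> D G1" "ctxspec \<Delta> D G2"
    "substok m \<Gamma> D Rs" "substok m \<Delta> D Rs"
    using split_all[OF r_let.prems(1,2) \<open>dom \<Gamma> \<inter> dom \<Delta> = {}\<close>] by metis
  have finG: "finite (dom \<Gamma>)" using rty_finite[OF r_let.hyps(2)] by simp
  have finD: "finite (dom \<Delta>)" using rty_finite[OF r_let.hyps(1)] .
  have dG: "dom \<Gamma> = fv u - {x}" using fv_upd[OF rty_fv[OF r_let.hyps(2)] \<open>x \<notin> dom \<Gamma>\<close>] .
  define z where "z = pick (avoid m u {x}) x"
  have z: "z \<notin> dom G1" unfolding z_def fresh_dom[OF G(5,3) dG] by (rule pick_notin[OF finite_avoid])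
  note be = bind_ext[OF G(5,3) \<open>x \<notin> dom \<Gamma>\<close> z, of A]
  have IHu: "rty (G1(z\<mapsto>A)) (R2 + sum Rs (dom \<Gamma>)) (substm (m(x\<mapsto>Var z)) u) B"
    using r_let.IH(2)[OF be] unfolding sum_ext[OF finG \<open>x \<notin> dom \<Gamma>\<close>] .
  have IHt: "rty G2 (R1 + sum Rs (dom \<Delta>)) (substm m t) A"
    using r_let.IH(1)[OF G(6,4)] .
  have typed: "rty (G1 ++ G2) ((R1 + sum Rs (dom \<Delta>)) + (R2 + sum Rs (dom \<Gamma>)))
      (Let (polty A) z (substm m t) (substm (m(x\<mapsto>Var z)) u) (polty B)) B"
    by (rule rty.r_let[OF IHt IHu z G(2)])
  have esub: "substm m (Let (polty A) x t u (polty B)) = Let (polty A) z (substm m t) (substm (m(x\<mapsto>Var z)) u) (polty B)"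
    by (simp add: z_def Let_def)
  have eres: "R1 + R2 + sum Rs (dom (\<Gamma> ++ \<Delta>)) = (R1 + sum Rs (dom \<Delta>)) + (R2 + sum Rs (dom \<Gamma>))"
    using sum_split[OF finG finD \<open>dom \<Gamma> \<inter> dom \<Delta> = {}\<close>] by (simp add: ac_simps)
  show ?case unfolding G(1) esub eres by (rule typed)
next
  case (r_pair \<Gamma> R1 v A \<Delta> R2 w B)
  obtain G1 G2 where G: "G = G1 ++ G2" "dom G1 \<inter> dom G2 = {}" "ctxspec \<Gamma> D G1" "ctxspec \<Delta> D G2"
    "substok m \<Gamma> D Rs" "substok m \<Delta> D Rs"
    using split_all[OF r_pair.prems(1,2) \<open>dom \<Gamma> \<inter> dom \<Delta> = {}\<close>] by metis
  have finG: "finite (dom \<Gamma>)" using rty_finite[OF r_pair.hyps(1)] .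
  have finD: "finite (dom \<Delta>)" using rty_finite[OF r_pair.hyps(2)] .
  have typed: "rty (G1 ++ G2) ((R1 + sum Rs (dom \<Gamma>)) + (R2 + sum Rs (dom \<Delta>))) (Pair (substm m v) (substm m w)) (TTensor A B)"
    by (rule rty.r_pair[OF r_pair.IH(1)[OF G(5,3)] r_pair.IH(2)[OF G(6,4)] G(2)])
  have esub: "substm m (Pair v w) = Pair (substm m v) (substm m w)" by simp
  have eres: "R1 + R2 + sum Rs (dom (\<Gamma> ++ \<Delta>)) = (R1 + sum Rs (dom \<Gamma>)) + (R2 + sum Rs (dom \<Delta>))"
    using sum_split[OF finG finD \<open>dom \<Gamma> \<inter> dom \<Delta> = {}\<close>] by (simp add: ac_simps)
  show ?case unfolding G(1) esub eres by (rule typed)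
next
  case (r_dtens \<Delta> R1 v A B \<Gamma> x y R2 t C)
  obtain G1 G2 where G: "G = G1 ++ G2" "dom G1 \<inter> dom G2 = {}" "ctxspec \<Gamma> D G1" "ctxspec \<Delta> D G2"
    "substok m \<Gamma> D Rs" "substok m \<Delta> D Rs"
    using split_all[OF r_dtens.prems(1,2) \<open>dom \<Gamma> \<inter> dom \<Delta> = {}\<close>] by metis
  have finG: "finite (dom \<Gamma>)" using rty_finite[OF r_dtens.hyps(2)] by simp
  have finD: "finite (dom \<Delta>)" using rty_finite[OF r_dtens.hyps(1)] .
  have dG: "dom \<Gamma> = fv t - {x, y}" using rty_fv[OF r_dtens.hyps(2)] \<open>x \<notin> dom \<Gamma>\<close> \<open>y \<notin> dom \<Gamma>\<close> by auto
  define S where "S = avoid m t {x, y}"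
  define z1 where "z1 = pick S x"
  define z2 where "z2 = pick (insert z1 S) y"
  have dG1: "dom G1 = S" unfolding S_def by (rule fresh_dom[OF G(5,3) dG])
  have z1: "z1 \<notin> dom G1" unfolding z1_def dG1 S_def by (rule pick_notin[OF finite_avoid])
  have z2': "z2 \<notin> insert z1 S" unfolding z2_def by (rule pick_notin) (simp add: S_def finite_avoid)
  then have z2: "z2 \<notin> dom (G1(z1\<mapsto>A))" "z2 \<notin> dom G1" "z1 \<noteq> z2" using dG1 by auto
  note be1 = bind_ext[OF G(5,3) \<open>x \<notin> dom \<Gamma>\<close> z1, of A]
  have y': "y \<notin> dom (\<Gamma>(x\<mapsto>A))" using \<open>y \<notin> dom \<Gamma>\<close> \<open>x \<noteq> y\<close> by simp
  note be2 = bind_ext[OF be1 y' z2(1), of B]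
  have fin1: "finite (dom (\<Gamma>(x\<mapsto>A)))" using finG by simp
  have IHt: "rty (G1(z1\<mapsto>A, z2\<mapsto>B)) (R2 + sum Rs (dom \<Gamma>)) (substm (m(x\<mapsto>Var z1, y\<mapsto>Var z2)) t) C"
    using r_dtens.IH(2)[OF be2] unfolding sum_ext[OF fin1 y'] sum_ext[OF finG \<open>x \<notin> dom \<Gamma>\<close>] .
  have IHv: "rty G2 (R1 + sum Rs (dom \<Delta>)) (substm m v) (TTensor A B)"
    using r_dtens.IH(1)[OF G(6,4)] .
  have typed: "rty (G1 ++ G2) ((R1 + sum Rs (dom \<Delta>)) + (R2 + sum Rs (dom \<Gamma>)))
      (DTens (substm m v) z1 z2 (substm (m(x\<mapsto>Var z1, y\<mapsto>Var z2)) t) (polty C)) C"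
    by (rule rty.r_dtens[OF IHv IHt z1 z2(2) z2(3) G(2)])
  have esub: "substm m (DTens v x y t (polty C)) = DTens (substm m v) z1 z2 (substm (m(x\<mapsto>Var z1, y\<mapsto>Var z2)) t) (polty C)"
    by (simp add: z1_def z2_def S_def Let_def)
  have eres: "R1 + R2 + sum Rs (dom (\<Gamma> ++ \<Delta>)) = (R1 + sum Rs (dom \<Delta>)) + (R2 + sum Rs (dom \<Gamma>))"
    using sum_split[OF finG finD \<open>dom \<Gamma> \<inter> dom \<Delta> = {}\<close>] by (simp add: ac_simps)
  show ?case unfolding G(1) esub eres by (rule typed)
next
  case (r_done \<Delta> R1 v \<Gamma> R2 t A)
  obtain G1 G2 where G: "G = G1 ++ G2" "dom G1 \<inter> dom G2 = {}" "ctxspec \<Gamma> D G1" "ctxspec \<Delta> D G2"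
    "substok m \<Gamma> D Rs" "substok m \<Delta> D Rs"
    using split_all[OF r_done.prems(1,2) \<open>dom \<Gamma> \<inter> dom \<Delta> = {}\<close>] by metis
  have finG: "finite (dom \<Gamma>)" using rty_finite[OF r_done.hyps(2)] .
  have finD: "finite (dom \<Delta>)" using rty_finite[OF r_done.hyps(1)] .
  have typed: "rty (G1 ++ G2) ((R1 + sum Rs (dom \<Delta>)) + (R2 + sum Rs (dom \<Gamma>))) (DOne (substm m v) (substm m t) (polty A)) A"
    by (rule rty.r_done[OF r_done.IH(1)[OF G(6,4)] r_done.IH(2)[OF G(5,3)] G(2)])
  have esub: "substm m (DOne v t (polty A)) = DOne (substm m v) (substm m t) (polty A)" by simp
  have eres: "R1 + R2 + sum Rs (dom (\<Gamma> ++ \<Delta>)) = (R1 + sum Rs (dom \<Delta>)) + (R2 + sum Rs (dom \<Gamma>))"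
    using sum_split[OF finG finD \<open>dom \<Gamma> \<inter> dom \<Delta> = {}\<close>] by (simp add: ac_simps)
  show ?case unfolding G(1) esub eres by (rule typed)
next
  case (r_inj1 \<Gamma> R v A B)
  then show ?case by (simp add: rty.r_inj1)
next
  case (r_inj2 \<Gamma> R v B A)
  then show ?case by (simp add: rty.r_inj2)
next
  case (r_dsum \<Delta> R1 v A B \<Gamma> x R2 t C y u)
  obtain G1 G2 where G: "G = G1 ++ G2" "dom G1 \<inter> dom G2 = {}" "ctxspec \<Gamma> D G1" "ctxspec \<Delta> D G2"
    "substok m \<Gamma> D Rs" "substok m \<Delta> D Rs"
    using split_all[OF r_dsum.prems(1,2) \<open>dom \<Gamma> \<inter> dom \<Delta> = {}\<close>] by metis
  have finG: "finite (dom \<Gamma>)" using rty_finite[OF r_dsum.hyps(2)] by simp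
  have finD: "finite (dom \<Delta>)" using rty_finite[OF r_dsum.hyps(1)] .
  have dGt: "dom \<Gamma> = fv t - {x}" using fv_upd[OF rty_fv[OF r_dsum.hyps(2)] \<open>x \<notin> dom \<Gamma>\<close>] .
  have dGu: "dom \<Gamma> = fv u - {y}" using fv_upd[OF rty_fv[OF r_dsum.hyps(3)] \<open>y \<notin> dom \<Gamma>\<close>] .
  define z1 where "z1 = pick (avoid m t {x}) x"
  define z2 where "z2 = pick (avoid m u {y}) y"
  have z1: "z1 \<notin> dom G1" unfolding z1_def fresh_dom[OF G(5,3) dGt] by (rule pick_notin[OF finite_avoid])
  have z2: "z2 \<notin> dom G1" unfolding z2_def fresh_dom[OF G(5,3) dGu] by (rule pick_notin[OF finite_avoid])
  note be1 = bind_ext[OF G(5,3) \<open>x \<notin> dom \<Gamma>\<close> z1, of A]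
  note be2 = bind_ext[OF G(5,3) \<open>y \<notin> dom \<Gamma>\<close> z2, of B]
  have IHt: "rty (G1(z1\<mapsto>A)) (R2 + sum Rs (dom \<Gamma>)) (substm (m(x\<mapsto>Var z1)) t) C"
    using r_dsum.IH(2)[OF be1] unfolding sum_ext[OF finG \<open>x \<notin> dom \<Gamma>\<close>] .
  have IHu: "rty (G1(z2\<mapsto>B)) (R2 + sum Rs (dom \<Gamma>)) (substm (m(y\<mapsto>Var z2)) u) C"
    using r_dsum.IH(3)[OF be2] unfolding sum_ext[OF finG \<open>y \<notin> dom \<Gamma>\<close>] .
  have IHv: "rty G2 (R1 + sum Rs (dom \<Delta>)) (substm m v) (TPlus A B)"
    using r_dsum.IH(1)[OF G(6,4)] .
  have typed: "rty (G1 ++ G2) ((R1 + sum Rs (dom \<Delta>)) + (R2 + sum Rs (dom \<Gamma>)))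
      (DSum (substm m v) z1 (substm (m(x\<mapsto>Var z1)) t) z2 (substm (m(y\<mapsto>Var z2)) u) (polty C)) C"
    by (rule rty.r_dsum[OF IHv IHt IHu z1 z2 G(2)])
  have esub: "substm m (DSum v x t y u (polty C)) = DSum (substm m v) z1 (substm (m(x\<mapsto>Var z1)) t) z2 (substm (m(y\<mapsto>Var z2)) u) (polty C)"
    by (simp add: z1_def z2_def Let_def)
  have eres: "R1 + R2 + sum Rs (dom (\<Gamma> ++ \<Delta>)) = (R1 + sum Rs (dom \<Delta>)) + (R2 + sum Rs (dom \<Gamma>))"
    using sum_split[OF finG finD \<open>dom \<Gamma> \<inter> dom \<Delta> = {}\<close>] by (simp add: ac_simps)
  show ?case unfolding G(1) esub eres by (rule typed)
next
  case (r_lam \<Gamma> x A R t B)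
  have finG: "finite (dom \<Gamma>)" using rty_finite[OF r_lam.hyps(1)] by simp
  have dG: "dom \<Gamma> = fv t - {x}" using fv_upd[OF rty_fv[OF r_lam.hyps(1)] \<open>x \<notin> dom \<Gamma>\<close>] .
  define z where "z = pick (avoid m t {x}) x"
  have z: "z \<notin> dom G" unfolding z_def fresh_dom[OF r_lam.prems(1,2) dG] by (rule pick_notin[OF finite_avoid])
  note be = bind_ext[OF r_lam.prems(1,2) \<open>x \<notin> dom \<Gamma>\<close> z, of A]
  have IHt: "rty (G(z\<mapsto>A)) (R + sum Rs (dom \<Gamma>)) (substm (m(x\<mapsto>Var z)) t) B"
    using r_lam.IH[OF be] unfolding sum_ext[OF finG \<open>x \<notin> dom \<Gamma>\<close>] .
  have "rty G (R + sum Rs (dom \<Gamma>)) (Lam z (substm (m(x\<mapsto>Var z)) t)) (TLolli A B)"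
    by (rule rty.r_lam[OF IHt z])
  moreover have "substm m (Lam x t) = Lam z (substm (m(x\<mapsto>Var z)) t)"
    by (simp add: z_def Let_def)
  ultimately show ?case by simp
next
  case (r_app \<Gamma> R1 w A \<Delta> R2 v B)
  obtain G1 G2 where G: "G = G1 ++ G2" "dom G1 \<inter> dom G2 = {}" "ctxspec \<Gamma> D G1" "ctxspec \<Delta> D G2"
    "substok m \<Gamma> D Rs" "substok m \<Delta> D Rs"
    using split_all[OF r_app.prems(1,2) \<open>dom \<Gamma> \<inter> dom \<Delta> = {}\<close>] by metis
  have finG: "finite (dom \<Gamma>)" using rty_finite[OF r_app.hyps(1)] .
  have finD: "finite (dom \<Delta>)" using rty_finite[OF r_app.hyps(2)] .
  have typed: "rty (G1 ++ G2) ((R1 + sum Rs (dom \<Gamma>)) + (R2 + sum Rs (dom \<Delta>))) (App (substm m v) (substm m w) (polty B)) B"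
    by (rule rty.r_app[OF r_app.IH(1)[OF G(5,3)] r_app.IH(2)[OF G(6,4)] G(2)])
  have esub: "substm m (App v w (polty B)) = App (substm m v) (substm m w) (polty B)" by simp
  have eres: "R1 + R2 + sum Rs (dom (\<Gamma> ++ \<Delta>)) = (R1 + sum Rs (dom \<Gamma>)) + (R2 + sum Rs (dom \<Delta>))"
    using sum_split[OF finG finD \<open>dom \<Gamma> \<inter> dom \<Delta> = {}\<close>] by (simp add: ac_simps)
  show ?case unfolding G(1) esub eres by (rule typed)
next
  case (r_with \<Gamma> R t A u B)
  then show ?case by (simp add: rty.r_with)
next
  case (r_proj1 \<Gamma> R v A1 A2)
  have esub: "substm m (Proj 1 v (polty A1)) = Proj 1 (substm m v) (polty A1)" by (simp only: substm.simps)
  show ?case unfolding esub by (rule rty.r_proj1[OF r_proj1.IH[OF r_proj1.prems]])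
next
  case (r_proj2 \<Gamma> R v A1 A2)
  have esub: "substm m (Proj 2 v (polty A2)) = Proj 2 (substm m v) (polty A2)" by (simp only: substm.simps)
  show ?case unfolding esub by (rule rty.r_proj2[OF r_proj2.IH[OF r_proj2.prems]])
qed


lemma subst1_lemma:
  assumes u: "rty [x\<mapsto>A] R2 u B" and v: "rty Map.empty R1 v A"
  shows "rty Map.empty (R2 + R1) (subst1 u v x) B"
proof -
  have so: "substok [x\<mapsto>v] [x\<mapsto>A] (\<lambda>_. Map.empty) (\<lambda>_. R1)"
    unfolding substok_def using v by (simp add: sig_def)
  have cs: "ctxspec [x\<mapsto>A] (\<lambda>_. Map.empty) Map.empty"
    unfolding ctxspec_def by simp
  have "rty Map.empty (R2 + sum (\<lambda>_. R1) (dom [x\<mapsto>A])) (substm [x\<mapsto>v] u) B"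
    by (rule subst_lemma[OF u so cs])
  then show ?thesis by (simp add: subst1_def)
qed

lemma subst2_lemma:
  assumes u: "rty [x\<mapsto>A, y\<mapsto>B] R u C" and xy: "x \<noteq> y"
    and v: "rty Map.empty R1 v A" and w: "rty Map.empty R2 w B"
  shows "rty Map.empty (R + (R1 + R2)) (subst2 u v x w y) C"
proof -
  have so: "substok [x\<mapsto>v, y\<mapsto>w] [x\<mapsto>A, y\<mapsto>B] (\<lambda>_. Map.empty) (\<lambda>z. if z = x then R1 else R2)"
    unfolding substok_def using v w xy by (simp add: sig_def)
  have cs: "ctxspec [x\<mapsto>A, y\<mapsto>B] (\<lambda>_. Map.empty) Map.empty"
    unfolding ctxspec_def by simp
  have "rty Map.empty (R + sum (\<lambda>z. if z = x then R1 else R2) (dom [x\<mapsto>A, y\<mapsto>B])) (substm [x\<mapsto>v, y\<mapsto>w] u) C"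
    by (rule subst_lemma[OF u so cs])
  moreover have "sum (\<lambda>z. if z = x then R1 else R2) (dom [x\<mapsto>A, y\<mapsto>B]) = R1 + R2"
    using xy by (simp add: add.commute)
  ultimately show ?thesis by (simp add: subst2_def)
qed

lemma mo_eq: "distinct (map fst xs) \<Longrightarrow> distinct (map fst ys) \<Longrightarrow> set xs = set ys \<Longrightarrow> map_of xs = map_of ys"
  using map_of_inject_set by blast

lemma dom_mo: "dom (map_of xs) = set (map fst xs)"
  by (simp add: dom_map_of_conv_image_fst)

lemma mo_app: "distinct (map fst (xs @ ys)) \<Longrightarrow> map_of (xs @ ys) = map_of xs ++ map_of ys"
proof -
  assume d: "distinct (map fst (xs @ ys))"
  then have "dom (map_of ys) \<inter> dom (map_of xs) = {}" by (auto simp: dom_mo)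
  then show ?thesis by (simp add: map_add_comm)
qed

lemma typing_rty: "typing \<Gamma> t A \<Longrightarrow> distinct (dom_ctx \<Gamma>) \<and> rty (map_of \<Gamma>) {#} t A"
proof (induction rule: typing.induct)
  case (t_var x A)
  have e: "map_of [(x, A)] = [x\<mapsto>A]" by (rule ext) simp
  have d: "distinct (dom_ctx [(x, A)])" by (simp add: dom_ctx_def)
  show ?case unfolding e using d r_var by blast
next
  case (t_struct \<Gamma> t A \<Gamma>' f)
  define m where "m = (\<lambda>y. if y \<in> set (dom_ctx \<Gamma>) then Some (Var (f y)) else None)"
  define D where "D = (\<lambda>y. [f y \<mapsto> the (map_of \<Gamma> y)])"
  have dG: "distinct (map fst \<Gamma>)" and r: "rty (map_of \<Gamma>) {#} t A" using t_struct.IH by (simp_all add: dom_ctx_def)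
  have dG': "distinct (map fst \<Gamma>')" using t_struct.hyps(2) by (simp add: dom_ctx_def)
  have sG': "set \<Gamma>' = (\<lambda>(y, B). (f y, B)) ` set \<Gamma>"
    using t_struct.hyps(3) by (metis set_map set_mset_mset)
  have "mset (map fst \<Gamma>') = mset (map fst (map (\<lambda>(y, B). (f y, B)) \<Gamma>))"
    using t_struct.hyps(3) by (metis mset_map)
  then have "distinct (map fst (map (\<lambda>(y, B). (f y, B)) \<Gamma>))"
    using dG' mset_eq_imp_distinct_iff by blast
  moreover have "map fst (map (\<lambda>(y, B). (f y, B)) \<Gamma>) = map f (map fst \<Gamma>)" by auto
  ultimately have "distinct (map f (map fst \<Gamma>))" by (simp only:)
  then have inj: "inj_on f (set (map fst \<Gamma>))" by (rule conjunct2[OF iffD1[OF distinct_map]])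
  have so: "substok m (map_of \<Gamma>) D (\<lambda>_. {#})"
    unfolding substok_def
  proof (intro allI impI)
    fix y B assume yB: "map_of \<Gamma> y = Some B"
    then have "y \<in> dom (map_of \<Gamma>)" by (rule domI)
    then have "y \<in> set (dom_ctx \<Gamma>)" unfolding dom_ctx_def dom_mo .
    then have "sig m y = Var (f y)" by (simp add: sig_def m_def)
    then show "rty (D y) {#} (sig m y) B" using yB by (simp add: D_def r_var)
  qed
  have cs: "ctxspec (map_of \<Gamma>) D (map_of \<Gamma>')"
    unfolding ctxspec_def
  proof (intro conjI ballI impI)
    have "dom (map_of \<Gamma>') = f ` set (map fst \<Gamma>)"
    proof -
      have fc: "fst \<circ> (\<lambda>(y, B). (f y, B)) = f \<circ> fst" by (rule ext) (simp add: case_prod_beta)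
      have "dom (map_of \<Gamma>') = fst ` set \<Gamma>'" by (rule dom_map_of_conv_image_fst)
      also have "\<dots> = (fst \<circ> (\<lambda>(y, B). (f y, B))) ` set \<Gamma>" unfolding sG' by (rule image_comp)
      also have "\<dots> = f ` fst ` set \<Gamma>" unfolding fc by (rule image_comp[symmetric])
      finally show ?thesis by simp
    qed
    moreover have "(\<Union>y\<in>dom (map_of \<Gamma>). dom (D y)) = f ` set (map fst \<Gamma>)"
    proof -
      have "\<And>y. dom (D y) = {f y}" by (simp add: D_def)
      then have "(\<Union>y\<in>dom (map_of \<Gamma>). dom (D y)) = (\<Union>y\<in>set (map fst \<Gamma>). {f y})" unfolding dom_mo by simp
      also have "\<dots> = f ` set (map fst \<Gamma>)" by (rule UNION_singleton_eq_range)
      finally show ?thesis .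
    qed
    ultimately show "dom (map_of \<Gamma>') = (\<Union>y\<in>dom (map_of \<Gamma>). dom (D y))" by simp
  next
    fix y assume "y \<in> dom (map_of \<Gamma>)"
    then obtain B where yB: "map_of \<Gamma> y = Some B" by blast
    then have "(y, B) \<in> set \<Gamma>" by (rule map_of_SomeD)
    then have "(f y, B) \<in> set \<Gamma>'" using sG' by force
    then have "map_of \<Gamma>' (f y) = Some B" using dG' by simp
    then show "D y \<subseteq>\<^sub>m map_of \<Gamma>'" using yB by (simp add: D_def map_le_def)
  next
    fix y y' assume "y \<in> dom (map_of \<Gamma>)" "y' \<in> dom (map_of \<Gamma>)" "y \<noteq> y'"
    then have "f y \<noteq> f y'" using inj unfolding dom_mo inj_on_def by blast
    then show "dom (D y) \<inter> dom (D y') = {}" by (simp add: D_def)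
  qed
  have "rty (map_of \<Gamma>') ({#} + sum (\<lambda>_. {#}) (dom (map_of \<Gamma>))) (substm m t) A"
    by (rule subst_lemma[OF r so cs])
  then show ?case using t_struct.hyps(2) by (simp add: m_def)
next
  case t_new
  then show ?case by (simp add: dom_ctx_def r_new)
next
  case t_delete
  then show ?case by (simp add: dom_ctx_def r_delete)
next
  case t_unit
  then show ?case by (simp add: dom_ctx_def r_unit)
next
  case (t_let \<Delta> t A \<Gamma> x u B)
  have d1: "distinct (map fst (\<Gamma> @ [(x, A)]))" and r1: "rty (map_of (\<Gamma> @ [(x, A)])) {#} u B"
    using t_let.IH(2) by (simp_all add: dom_ctx_def)
  have d2: "distinct (map fst (\<Gamma> @ \<Delta>))" using t_let.hyps(3) by (simp add: dom_ctx_def)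
  have e1: "map_of (\<Gamma> @ [(x, A)]) = (map_of \<Gamma>)(x\<mapsto>A)"
    using mo_eq[of "\<Gamma> @ [(x, A)]" "(x, A) # \<Gamma>"] d1 by auto
  have x: "x \<notin> dom (map_of \<Gamma>)" using d1 by (simp add: dom_mo)
  have dj: "dom (map_of \<Gamma>) \<inter> dom (map_of \<Delta>) = {}" using d2 by (auto simp: dom_mo)
  have "rty (map_of \<Gamma> ++ map_of \<Delta>) ({#} + {#}) (Let (polty A) x t u (polty B)) B"
    using rty.r_let[OF conjunct2[OF t_let.IH(1)] r1[unfolded e1] x dj] .
  then show ?case using d2 mo_app[OF d2] by (simp add: dom_ctx_def)
next
  case (t_pair v w \<Gamma> A \<Delta> B)
  have d2: "distinct (map fst (\<Gamma> @ \<Delta>))" using t_pair.hyps(5) by (simp add: dom_ctx_def)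
  have dj: "dom (map_of \<Gamma>) \<inter> dom (map_of \<Delta>) = {}" using d2 by (auto simp: dom_mo)
  have "rty (map_of \<Gamma> ++ map_of \<Delta>) ({#} + {#}) (Pair v w) (TTensor A B)"
    using rty.r_pair[OF conjunct2[OF t_pair.IH(1)] conjunct2[OF t_pair.IH(2)] dj] .
  then show ?case using d2 mo_app[OF d2] by (simp add: dom_ctx_def)
next
  case (t_dtens v \<Delta> A B \<Gamma> x y \<Gamma>' t C)
  have d1: "distinct (map fst (\<Gamma> @ [(x, A), (y, B)] @ \<Gamma>'))" and r1: "rty (map_of (\<Gamma> @ [(x, A), (y, B)] @ \<Gamma>')) {#} t C"
    using t_dtens.IH(2) by (simp_all add: dom_ctx_def)
  have d2: "distinct (map fst (\<Gamma> @ \<Delta> @ \<Gamma>'))" using t_dtens.hyps(4) by (simp add: dom_ctx_def)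
  have e1: "map_of (\<Gamma> @ [(x, A), (y, B)] @ \<Gamma>') = (map_of (\<Gamma> @ \<Gamma>'))(x\<mapsto>A, y\<mapsto>B)"
    using mo_eq[of "\<Gamma> @ [(x, A), (y, B)] @ \<Gamma>'" "(y, B) # (x, A) # \<Gamma> @ \<Gamma>'"] d1 by auto
  have x: "x \<notin> dom (map_of (\<Gamma> @ \<Gamma>'))" and y: "y \<notin> dom (map_of (\<Gamma> @ \<Gamma>'))" and xy: "x \<noteq> y"
    using d1 by (auto simp: dom_mo)
  have dj: "dom (map_of (\<Gamma> @ \<Gamma>')) \<inter> dom (map_of \<Delta>) = {}" using d2 by (auto simp: dom_mo)
  have "rty (map_of (\<Gamma> @ \<Gamma>') ++ map_of \<Delta>) ({#} + {#}) (DTens v x y t (polty C)) C"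
    using rty.r_dtens[OF conjunct2[OF t_dtens.IH(1)] r1[unfolded e1] x y xy dj] .
  moreover have "map_of (\<Gamma> @ \<Delta> @ \<Gamma>') = map_of (\<Gamma> @ \<Gamma>') ++ map_of \<Delta>"
  proof -
    have "map_of (\<Gamma> @ \<Delta> @ \<Gamma>') = map_of ((\<Gamma> @ \<Gamma>') @ \<Delta>)"
      using d2 by (intro mo_eq) auto
    also have "\<dots> = map_of (\<Gamma> @ \<Gamma>') ++ map_of \<Delta>" using d2 by (intro mo_app) auto
    finally show ?thesis .
  qed
  ultimately show ?case using d2 by (simp add: dom_ctx_def)
next
  case (t_done v \<Delta> \<Gamma> \<Gamma>' t A)
  have d2: "distinct (map fst (\<Gamma> @ \<Delta> @ \<Gamma>'))" using t_done.hyps(4) by (simp add: dom_ctx_def)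
  have dj: "dom (map_of (\<Gamma> @ \<Gamma>')) \<inter> dom (map_of \<Delta>) = {}" using d2 by (auto simp: dom_mo)
  have "rty (map_of (\<Gamma> @ \<Gamma>') ++ map_of \<Delta>) ({#} + {#}) (DOne v t (polty A)) A"
    using rty.r_done[OF conjunct2[OF t_done.IH(1)] conjunct2[OF t_done.IH(2)] dj] .
  moreover have "map_of (\<Gamma> @ \<Delta> @ \<Gamma>') = map_of (\<Gamma> @ \<Gamma>') ++ map_of \<Delta>"
  proof -
    have "map_of (\<Gamma> @ \<Delta> @ \<Gamma>') = map_of ((\<Gamma> @ \<Gamma>') @ \<Delta>)"
      using d2 by (intro mo_eq) auto
    also have "\<dots> = map_of (\<Gamma> @ \<Gamma>') ++ map_of \<Delta>" using d2 by (intro mo_app) auto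
    finally show ?thesis .
  qed
  ultimately show ?case using d2 by (simp add: dom_ctx_def)
next
  case (t_inj1 v \<Gamma> A B)
  then show ?case by (simp add: r_inj1)
next
  case (t_inj2 v \<Gamma> B A)
  then show ?case by (simp add: r_inj2)
next
  case (t_dsum v \<Delta> A B \<Gamma> x \<Gamma>' t C y u)
  have d1: "distinct (map fst (\<Gamma> @ [(x, A)] @ \<Gamma>'))" and r1: "rty (map_of (\<Gamma> @ [(x, A)] @ \<Gamma>')) {#} t C"
    using t_dsum.IH(2) by (simp_all add: dom_ctx_def)
  have d3: "distinct (map fst (\<Gamma> @ [(y, B)] @ \<Gamma>'))" and r3: "rty (map_of (\<Gamma> @ [(y, B)] @ \<Gamma>')) {#} u C"
    using t_dsum.IH(3) by (simp_all add: dom_ctx_def)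
  have d2: "distinct (map fst (\<Gamma> @ \<Delta> @ \<Gamma>'))" using t_dsum.hyps(5) by (simp add: dom_ctx_def)
  have e1: "map_of (\<Gamma> @ [(x, A)] @ \<Gamma>') = (map_of (\<Gamma> @ \<Gamma>'))(x\<mapsto>A)"
    using mo_eq[of "\<Gamma> @ [(x, A)] @ \<Gamma>'" "(x, A) # \<Gamma> @ \<Gamma>'"] d1 by auto
  have e3: "map_of (\<Gamma> @ [(y, B)] @ \<Gamma>') = (map_of (\<Gamma> @ \<Gamma>'))(y\<mapsto>B)"
    using mo_eq[of "\<Gamma> @ [(y, B)] @ \<Gamma>'" "(y, B) # \<Gamma> @ \<Gamma>'"] d3 by auto
  have x: "x \<notin> dom (map_of (\<Gamma> @ \<Gamma>'))" using d1 by (auto simp: dom_mo)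
  have y: "y \<notin> dom (map_of (\<Gamma> @ \<Gamma>'))" using d3 by (auto simp: dom_mo)
  have dj: "dom (map_of (\<Gamma> @ \<Gamma>')) \<inter> dom (map_of \<Delta>) = {}" using d2 by (auto simp: dom_mo)
  have "rty (map_of (\<Gamma> @ \<Gamma>') ++ map_of \<Delta>) ({#} + {#}) (DSum v x t y u (polty C)) C"
    using rty.r_dsum[OF conjunct2[OF t_dsum.IH(1)] r1[unfolded e1] r3[unfolded e3] x y dj] .
  moreover have "map_of (\<Gamma> @ \<Delta> @ \<Gamma>') = map_of (\<Gamma> @ \<Gamma>') ++ map_of \<Delta>"
  proof -
    have "map_of (\<Gamma> @ \<Delta> @ \<Gamma>') = map_of ((\<Gamma> @ \<Gamma>') @ \<Delta>)"
      using d2 by (intro mo_eq) auto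
    also have "\<dots> = map_of (\<Gamma> @ \<Gamma>') ++ map_of \<Delta>" using d2 by (intro mo_app) auto
    finally show ?thesis .
  qed
  ultimately show ?case using d2 by (simp add: dom_ctx_def)
next
  case (t_lam x A \<Gamma> t B)
  have d1: "distinct (map fst ((x, A) # \<Gamma>))" using t_lam.IH by (simp add: dom_ctx_def)
  have r1: "rty (map_of ((x, A) # \<Gamma>)) {#} t B" using t_lam.IH by (rule conjunct2)
  have x: "x \<notin> dom (map_of \<Gamma>)" using d1 by (simp add: dom_mo)
  have r1': "rty ((map_of \<Gamma>)(x\<mapsto>A)) {#} t B" using r1 by (simp only: map_of.simps fst_conv snd_conv)
  have "rty (map_of \<Gamma>) {#} (Lam x t) (TLolli A B)"
    by (rule rty.r_lam[OF r1' x])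
  then show ?case using d1 by (simp add: dom_ctx_def)
next
  case (t_app w v \<Gamma> A \<Delta> B)
  have d2: "distinct (map fst (\<Gamma> @ \<Delta>))" using t_app.hyps(5) by (simp add: dom_ctx_def)
  have dj: "dom (map_of \<Gamma>) \<inter> dom (map_of \<Delta>) = {}" using d2 by (auto simp: dom_mo)
  have "rty (map_of \<Gamma> ++ map_of \<Delta>) ({#} + {#}) (App v w (polty B)) B"
    using rty.r_app[OF conjunct2[OF t_app.IH(1)] conjunct2[OF t_app.IH(2)] dj] .
  then show ?case using d2 mo_app[OF d2] by (simp add: dom_ctx_def)
next
  case (t_with \<Gamma> t A u B)
  then show ?case by (simp add: r_with)
next
  case (t_proj1 v \<Gamma> A1 A2)
  then show ?case using r_proj1 by blast
next
  case (t_proj2 v \<Gamma> A1 A2)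
  then show ?case using r_proj2 by blast
qed


lemma emp_add: "Map.empty = \<Gamma> ++ \<Delta> \<Longrightarrow> \<Gamma> = Map.empty \<and> \<Delta> = Map.empty"
proof -
  assume h: "Map.empty = \<Gamma> ++ \<Delta>"
  have "\<And>k. \<Gamma> k = None \<and> \<Delta> k = None"
  proof -
    fix k have "(\<Gamma> ++ \<Delta>) k = None" using fun_cong[OF h, of k] by simp
    then show "\<Gamma> k = None \<and> \<Delta> k = None" by simp
  qed
  then show ?thesis by (simp add: fun_eq_iff)
qed

inductive_cases E_let: "rty \<Gamma> R (Let p x t u q) B"
inductive_cases E_app: "rty \<Gamma> R (App v w q) B"
inductive_cases E_lam: "rty \<Gamma> R (Lam x t) T"
inductive_cases E_proj: "rty \<Gamma> R (Proj i v q) T"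
inductive_cases E_wpair: "rty \<Gamma> R (WPair t u) T"
inductive_cases E_dtens: "rty \<Gamma> R (DTens v x y t q) C"
inductive_cases E_pair: "rty \<Gamma> R (Pair v w) T"
inductive_cases E_done: "rty \<Gamma> R (DOne v t q) A"
inductive_cases E_unit: "rty \<Gamma> R Unit T"
inductive_cases E_dsum: "rty \<Gamma> R (DSum v x t y u q) C"
inductive_cases E_inj1: "rty \<Gamma> R (Inj1 v) T"
inductive_cases E_inj2: "rty \<Gamma> R (Inj2 v) T"
inductive_cases E_new: "rty \<Gamma> R New T"
inductive_cases E_delete: "rty \<Gamma> R Delete T"
inductive_cases E_res: "rty \<Gamma> R (Res n) T"

lemma inv_let: "rty Map.empty R (Let p x t u q) B \<Longrightarrow> \<exists>R1 R2 A. R = R1 + R2 \<and> rty Map.empty R1 t A \<and> rty [x\<mapsto>A] R2 u B"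
  by (erule E_let) (auto dest!: emp_add)

lemma inv_app: "rty Map.empty R (App v w q) B \<Longrightarrow> \<exists>R1 R2 A. R = R1 + R2 \<and> rty Map.empty R1 w A \<and> rty Map.empty R2 v (TLolli A B)"
  by (erule E_app) (auto dest!: emp_add)

lemma inv_lam: "rty Map.empty R (Lam x t) T \<Longrightarrow> \<exists>A B. T = TLolli A B \<and> rty [x\<mapsto>A] R t B"
  by (erule E_lam) blast

lemma inv_proj: "rty Map.empty R (Proj i v q) T \<Longrightarrow> (i = 1 \<and> (\<exists>A2. rty Map.empty R v (TWith T A2))) \<or> (i = 2 \<and> (\<exists>A1. rty Map.empty R v (TWith A1 T)))"
  by (erule E_proj) (simp_all, blast+)

lemma inv_wpair: "rty \<Gamma> R (WPair t u) T \<Longrightarrow> \<exists>A B. T = TWith A B \<and> rty \<Gamma> R t A \<and> rty \<Gamma> R u B"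
  by (erule E_wpair) blast

lemma inv_dtens: "rty Map.empty R (DTens v x y t q) C \<Longrightarrow> \<exists>R1 R2 A B. R = R1 + R2 \<and> rty Map.empty R1 v (TTensor A B) \<and> rty [x\<mapsto>A, y\<mapsto>B] R2 t C \<and> x \<noteq> y"
  by (erule E_dtens) (auto dest!: emp_add)

lemma inv_pair: "rty Map.empty R (Pair v w) T \<Longrightarrow> \<exists>R1 R2 A B. T = TTensor A B \<and> R = R1 + R2 \<and> rty Map.empty R1 v A \<and> rty Map.empty R2 w B"
  by (erule E_pair) (auto dest!: emp_add)

lemma inv_done: "rty Map.empty R (DOne v t q) A \<Longrightarrow> \<exists>R1 R2. R = R1 + R2 \<and> rty Map.empty R1 v TOne \<and> rty Map.empty R2 t A"
  by (erule E_done) (auto dest!: emp_add)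

lemma inv_unit: "rty \<Gamma> R Unit T \<Longrightarrow> R = {#} \<and> T = TOne"
  by (erule E_unit) simp

lemma inv_dsum: "rty Map.empty R (DSum v x t y u q) C \<Longrightarrow> \<exists>R1 R2 A B. R = R1 + R2 \<and> rty Map.empty R1 v (TPlus A B) \<and> rty [x\<mapsto>A] R2 t C \<and> rty [y\<mapsto>B] R2 u C"
  by (erule E_dsum) (auto dest!: emp_add)

lemma inv_inj1: "rty \<Gamma> R (Inj1 v) T \<Longrightarrow> \<exists>A B. T = TPlus A B \<and> rty \<Gamma> R v A"
  by (erule E_inj1) blast

lemma inv_inj2: "rty \<Gamma> R (Inj2 v) T \<Longrightarrow> \<exists>A B. T = TPlus A B \<and> rty \<Gamma> R v B"
  by (erule E_inj2) blast

lemma inv_new: "rty \<Gamma> R New T \<Longrightarrow> R = {#} \<and> T = TLolli TOne (TPlus TR TOne)"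
  by (erule E_new) simp

lemma inv_delete: "rty \<Gamma> R Delete T \<Longrightarrow> R = {#} \<and> T = TLolli TR TOne"
  by (erule E_delete) simp

lemma inv_res: "rty \<Gamma> R (Res n) T \<Longrightarrow> R = {#n#} \<and> T = TR"
  by (erule E_res) simp

inductive sty :: "ty \<Rightarrow> stack \<Rightarrow> ty \<Rightarrow> nat multiset \<Rightarrow> bool" for W where
  sty_nil: "sty W [] W {#}"
| sty_arg: "rty Map.empty R1 w A \<Longrightarrow> sty W s B R2 \<Longrightarrow> sty W (FArg w e # s) (TLolli A B) (R1 + R2)"
| sty_proj1: "sty W s A1 R \<Longrightarrow> sty W (FProj 1 e # s) (TWith A1 A2) R"
| sty_proj2: "sty W s A2 R \<Longrightarrow> sty W (FProj 2 e # s) (TWith A1 A2) R"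
| sty_let: "rty [x \<mapsto> A] R1 u B \<Longrightarrow> sty W s B R2 \<Longrightarrow> sty W (FLet x u e # s) A (R1 + R2)"

inductive_cases SE_nil: "sty W [] A R"
inductive_cases SE_arg: "sty W (FArg w e # s) T R"
inductive_cases SE_proj: "sty W (FProj i e # s) T R"
inductive_cases SE_let: "sty W (FLet x u e # s) A R"

lemma sinv_nil: "sty W [] A R \<Longrightarrow> A = W \<and> R = {#}"
  by (erule SE_nil) simp

lemma sinv_arg: "sty W (FArg w e # s) T R \<Longrightarrow> \<exists>A B R1 R2. T = TLolli A B \<and> R = R1 + R2 \<and> rty Map.empty R1 w A \<and> sty W s B R2"
  by (erule SE_arg) blast

lemma sinv_proj1: "sty W (FProj 1 e # s) T R \<Longrightarrow> \<exists>A1 A2. T = TWith A1 A2 \<and> sty W s A1 R"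
  by (erule SE_proj) auto

lemma sinv_proj2: "sty W (FProj 2 e # s) T R \<Longrightarrow> \<exists>A1 A2. T = TWith A1 A2 \<and> sty W s A2 R"
  by (erule SE_proj) auto

lemma sinv_let: "sty W (FLet x u e # s) A R \<Longrightarrow> \<exists>B R1 R2. R = R1 + R2 \<and> rty [x\<mapsto>A] R1 u B \<and> sty W s B R2"
  by (erule SE_let) blast

definition inv :: "ty \<Rightarrow> nat multiset \<Rightarrow> cmd \<Rightarrow> bool" where
  "inv W M c \<longleftrightarrow> (\<exists>A R1 R2. rty Map.empty R1 (fst c) A \<and> sty W (fst (snd c)) A R2 \<and> R1 + R2 + mset (fst (snd (snd c))) = M)"

lemma invI: "rty Map.empty R1 t A \<Longrightarrow> sty W s A R2 \<Longrightarrow> R1 + R2 + mset l = M \<Longrightarrow> inv W M (t, s, l, e)"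
  unfolding inv_def by auto

lemma invE: "inv W M (t, s, l, e) \<Longrightarrow> (\<And>A R1 R2. rty Map.empty R1 t A \<Longrightarrow> sty W s A R2 \<Longrightarrow> R1 + R2 + mset l = M \<Longrightarrow> P) \<Longrightarrow> P"
  unfolding inv_def by auto


lemma pres: "step c c' \<Longrightarrow> inv W M c \<Longrightarrow> inv W M c'"
proof (induction rule: step.induct)
  case (s_letneg v x t e s l)
  from s_letneg.prems obtain T R1 R2 where h: "rty Map.empty R1 (Let Neg x v t e) T" "sty W s T R2" "R1 + R2 + mset l = M"
    by (rule invE)
  from inv_let[OF h(1)] obtain Ra Rb A where a: "R1 = Ra + Rb" "rty Map.empty Ra v A" "rty [x\<mapsto>A] Rb t T" by blast
  have "rty Map.empty (Rb + Ra) (subst1 t v x) T" by (rule subst1_lemma[OF a(3) a(2)])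
  moreover have "(Rb + Ra) + R2 + mset l = M" using h(3) a(1) by (simp add: ac_simps)
  ultimately show ?case using h(2) by (blast intro: invI)
next
  case (s_letpos x t u e s l)
  from s_letpos.prems obtain T R1 R2 where h: "rty Map.empty R1 (Let Pos x t u e) T" "sty W s T R2" "R1 + R2 + mset l = M"
    by (rule invE)
  from inv_let[OF h(1)] obtain Ra Rb A where a: "R1 = Ra + Rb" "rty Map.empty Ra t A" "rty [x\<mapsto>A] Rb u T" by blast
  have "sty W (FLet x u e # s) A (Rb + R2)" by (rule sty_let[OF a(3) h(2)])
  moreover have "Ra + (Rb + R2) + mset l = M" using h(3) a(1) by (simp add: ac_simps)
  ultimately show ?case using a(2) by (blast intro: invI)
next
  case (s_ret v x t e s l)
  from s_ret.prems obtain T R1 R2 where h: "rty Map.empty R1 v T" "sty W (FLet x t e # s) T R2" "R1 + R2 + mset l = M"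
    by (rule invE)
  from sinv_let[OF h(2)] obtain B Ra Rb where a: "R2 = Ra + Rb" "rty [x\<mapsto>T] Ra t B" "sty W s B Rb" by blast
  have "rty Map.empty (Ra + R1) (subst1 t v x) B" by (rule subst1_lemma[OF a(2) h(1)])
  moreover have "(Ra + R1) + Rb + mset l = M" using h(3) a(1) by (simp add: ac_simps)
  ultimately show ?case using a(3) by (blast intro: invI)
next
  case (s_app v w e s l)
  from s_app.prems obtain T R1 R2 where h: "rty Map.empty R1 (App v w e) T" "sty W s T R2" "R1 + R2 + mset l = M"
    by (rule invE)
  from inv_app[OF h(1)] obtain Ra Rb A where a: "R1 = Ra + Rb" "rty Map.empty Ra w A" "rty Map.empty Rb v (TLolli A T)" by blast
  have "sty W (FArg w e # s) (TLolli A T) (Ra + R2)" by (rule sty_arg[OF a(2) h(2)])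
  moreover have "Rb + (Ra + R2) + mset l = M" using h(3) a(1) by (simp add: ac_simps)
  ultimately show ?case using a(3) by (blast intro: invI)
next
  case (s_lam v x t e s l)
  from s_lam.prems obtain T R1 R2 where h: "rty Map.empty R1 (Lam x t) T" "sty W (FArg v e # s) T R2" "R1 + R2 + mset l = M"
    by (rule invE)
  from inv_lam[OF h(1)] obtain A B where a: "T = TLolli A B" "rty [x\<mapsto>A] R1 t B" by blast
  from sinv_arg[OF h(2)] obtain A' B' Ra Rb where b: "T = TLolli A' B'" "R2 = Ra + Rb" "rty Map.empty Ra v A'" "sty W s B' Rb" by blast
  have AB: "A' = A" "B' = B" using a(1) b(1) by simp_all
  have "rty Map.empty (R1 + Ra) (subst1 t v x) B" using subst1_lemma[OF a(2)] b(3) AB by simp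
  moreover have "(R1 + Ra) + Rb + mset l = M" using h(3) b(2) by (simp add: ac_simps)
  ultimately show ?case using b(4) AB by (auto intro!: invI)
next
  case (s_proj i v e s l)
  from s_proj.prems obtain T R1 R2 where h: "rty Map.empty R1 (Proj i v e) T" "sty W s T R2" "R1 + R2 + mset l = M"
    by (rule invE)
  from inv_proj[OF h(1)] show ?case
  proof
    assume "i = 1 \<and> (\<exists>A2. rty Map.empty R1 v (TWith T A2))"
    then obtain A2 where "i = 1" "rty Map.empty R1 v (TWith T A2)" by blast
    moreover have "sty W (FProj 1 e # s) (TWith T A2) R2" by (rule sty_proj1[OF h(2)])
    ultimately show ?case using h(3) by (auto intro!: invI)
  next
    assume "i = 2 \<and> (\<exists>A1. rty Map.empty R1 v (TWith A1 T))"
    then obtain A1 where "i = 2" "rty Map.empty R1 v (TWith A1 T)" by blast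
    moreover have "sty W (FProj 2 e # s) (TWith A1 T) R2" by (rule sty_proj2[OF h(2)])
    ultimately show ?case using h(3) by (auto intro!: invI)
  qed
next
  case (s_with1 t1 t2 e s l)
  from s_with1.prems obtain T R1 R2 where h: "rty Map.empty R1 (WPair t1 t2) T" "sty W (FProj 1 e # s) T R2" "R1 + R2 + mset l = M"
    by (rule invE)
  from inv_wpair[OF h(1)] obtain A B where a: "T = TWith A B" "rty Map.empty R1 t1 A" by blast
  from sinv_proj1[OF h(2)] obtain A1 A2 where b: "T = TWith A1 A2" "sty W s A1 R2" by blast
  show ?case using a b h(3) by (auto intro!: invI)
next
  case (s_with2 t1 t2 e s l)
  from s_with2.prems obtain T R1 R2 where h: "rty Map.empty R1 (WPair t1 t2) T" "sty W (FProj 2 e # s) T R2" "R1 + R2 + mset l = M"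
    by (rule invE)
  from inv_wpair[OF h(1)] obtain A B where a: "T = TWith A B" "rty Map.empty R1 t2 B" by blast
  from sinv_proj2[OF h(2)] obtain A1 A2 where b: "T = TWith A1 A2" "sty W s A2 R2" by blast
  show ?case using a b h(3) by (auto intro!: invI)
next
  case (s_tens v w x y t e s l)
  from s_tens.prems obtain T R1 R2 where h: "rty Map.empty R1 (DTens (Pair v w) x y t e) T" "sty W s T R2" "R1 + R2 + mset l = M"
    by (rule invE)
  from inv_dtens[OF h(1)] obtain Ra Rb A B where a: "R1 = Ra + Rb" "rty Map.empty Ra (Pair v w) (TTensor A B)" "rty [x\<mapsto>A, y\<mapsto>B] Rb t T" "x \<noteq> y" by blast
  from inv_pair[OF a(2)] obtain Rc Rd A' B' where b: "TTensor A B = TTensor A' B'" "Ra = Rc + Rd" "rty Map.empty Rc v A'" "rty Map.empty Rd w B'" by blast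
  have "rty Map.empty (Rb + (Rc + Rd)) (subst2 t v x w y) T" using subst2_lemma[OF a(3) a(4)] b by simp
  moreover have "(Rb + (Rc + Rd)) + R2 + mset l = M" using h(3) a(1) b(2) by (simp add: ac_simps)
  ultimately show ?case using h(2) by (blast intro: invI)
next
  case (s_one t e s l)
  from s_one.prems obtain T R1 R2 where h: "rty Map.empty R1 (DOne Unit t e) T" "sty W s T R2" "R1 + R2 + mset l = M"
    by (rule invE)
  from inv_done[OF h(1)] obtain Ra Rb where a: "R1 = Ra + Rb" "rty Map.empty Ra Unit TOne" "rty Map.empty Rb t T" by blast
  have "Ra = {#}" using inv_unit[OF a(2)] by simp
  then have "Rb + R2 + mset l = M" using h(3) a(1) by simp
  then show ?case using a(3) h(2) by (blast intro: invI)
next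
  case (s_sum1 v x1 t1 x2 t2 e s l)
  from s_sum1.prems obtain T R1 R2 where h: "rty Map.empty R1 (DSum (Inj1 v) x1 t1 x2 t2 e) T" "sty W s T R2" "R1 + R2 + mset l = M"
    by (rule invE)
  from inv_dsum[OF h(1)] obtain Ra Rb A B where a: "R1 = Ra + Rb" "rty Map.empty Ra (Inj1 v) (TPlus A B)" "rty [x1\<mapsto>A] Rb t1 T" by blast
  from inv_inj1[OF a(2)] obtain A' B' where b: "TPlus A B = TPlus A' B'" "rty Map.empty Ra v A'" by blast
  have "rty Map.empty (Rb + Ra) (subst1 t1 v x1) T" using subst1_lemma[OF a(3)] b by simp
  moreover have "(Rb + Ra) + R2 + mset l = M" using h(3) a(1) by (simp add: ac_simps)
  ultimately show ?case using h(2) by (blast intro: invI)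
next
  case (s_sum2 v x1 t1 x2 t2 e s l)
  from s_sum2.prems obtain T R1 R2 where h: "rty Map.empty R1 (DSum (Inj2 v) x1 t1 x2 t2 e) T" "sty W s T R2" "R1 + R2 + mset l = M"
    by (rule invE)
  from inv_dsum[OF h(1)] obtain Ra Rb A B where a: "R1 = Ra + Rb" "rty Map.empty Ra (Inj2 v) (TPlus A B)" "rty [x2\<mapsto>B] Rb t2 T" by blast
  from inv_inj2[OF a(2)] obtain A' B' where b: "TPlus A B = TPlus A' B'" "rty Map.empty Ra v B'" by blast
  have "rty Map.empty (Rb + Ra) (subst1 t2 v x2) T" using subst1_lemma[OF a(3)] b by simp
  moreover have "(Rb + Ra) + R2 + mset l = M" using h(3) a(1) by (simp add: ac_simps)
  ultimately show ?case using h(2) by (blast intro: invI)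
next
  case (s_new e s n l)
  from s_new.prems obtain T R1 R2 where h: "rty Map.empty R1 New T" "sty W (FArg Unit e # s) T R2" "R1 + R2 + mset (n # l) = M"
    by (rule invE)
  have a: "R1 = {#}" "T = TLolli TOne (TPlus TR TOne)" using inv_new[OF h(1)] by simp_all
  from sinv_arg[OF h(2)] obtain A B Ra Rb where b: "T = TLolli A B" "R2 = Ra + Rb" "rty Map.empty Ra Unit A" "sty W s B Rb" by blast
  have c: "Ra = {#}" "B = TPlus TR TOne" using inv_unit[OF b(3)] a(2) b(1) by simp_all
  have "rty Map.empty {#n#} (Inj1 (Res n)) (TPlus TR TOne)" by (intro r_inj1 r_res)
  moreover have "{#n#} + Rb + mset l = M" using h(3) a(1) b(2) c(1) by simp
  ultimately show ?case using b(4) c(2) by (auto intro!: invI)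
next
  case (s_new_fail e s)
  from s_new_fail.prems obtain T R1 R2 where h: "rty Map.empty R1 New T" "sty W (FArg Unit e # s) T R2" "R1 + R2 + mset [] = M"
    by (rule invE)
  have a: "R1 = {#}" "T = TLolli TOne (TPlus TR TOne)" using inv_new[OF h(1)] by simp_all
  from sinv_arg[OF h(2)] obtain A B Ra Rb where b: "T = TLolli A B" "R2 = Ra + Rb" "rty Map.empty Ra Unit A" "sty W s B Rb" by blast
  have c: "Ra = {#}" "B = TPlus TR TOne" using inv_unit[OF b(3)] a(2) b(1) by simp_all
  have "rty Map.empty {#} (Inj2 Unit) (TPlus TR TOne)" by (intro r_inj2 r_unit)
  moreover have "{#} + Rb + mset [] = M" using h(3) a(1) b(2) c(1) by simp
  ultimately show ?case using b(4) c(2) by (auto intro!: invI)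
next
  case (s_delete n e s l)
  from s_delete.prems obtain T R1 R2 where h: "rty Map.empty R1 Delete T" "sty W (FArg (Res n) e # s) T R2" "R1 + R2 + mset l = M"
    by (rule invE)
  have a: "R1 = {#}" "T = TLolli TR TOne" using inv_delete[OF h(1)] by simp_all
  from sinv_arg[OF h(2)] obtain A B Ra Rb where b: "T = TLolli A B" "R2 = Ra + Rb" "rty Map.empty Ra (Res n) A" "sty W s B Rb" by blast
  have c: "Ra = {#n#}" "B = TOne" using inv_res[OF b(3)] a(2) b(1) by simp_all
  have "rty Map.empty {#} Unit TOne" by (rule r_unit)
  moreover have "{#} + Rb + mset (n # l) = M" using h(3) a(1) b(2) c(1) by simp
  ultimately show ?case using b(4) c(2) by (auto intro!: invI)
qed

lemma steps_inv: "steps c c' \<Longrightarrow> inv W M c \<Longrightarrow> inv W M c'"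
  by (induction rule: rtranclp_induct) (auto intro: pres)

lemma central_pos: "central W \<Longrightarrow> polty W = Pos"
  by (induction rule: central.induct) auto

inductive_cases CE_tens: "central (TTensor A B)"
inductive_cases CE_plus: "central (TPlus A B)"
inductive_cases CE_other: "central TR" "central (TLolli A B)" "central (TWith A B)"

inductive_cases VE: "is_val (Pair v w)" "is_val (Inj1 v)" "is_val (Inj2 v)"
  "is_val (Let p x t u q)" "is_val (DTens v x y t q)" "is_val (DOne v t q)"
  "is_val (DSum v x t y u q)" "is_val (App v w q)" "is_val (Proj i v q)"

lemma val_central: "is_val v \<Longrightarrow> rty \<Gamma> R v W \<Longrightarrow> central W \<Longrightarrow> R = {#}"
proof (induction v arbitrary: \<Gamma> R W)
  case (Var x)
  then show ?case by (auto elim: rty.cases)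
next
  case New
  then show ?case by (auto elim: rty.cases CE_other)
next
  case Delete
  then show ?case by (auto elim: rty.cases CE_other)
next
  case (Pair v w)
  from Pair.prems(2) obtain \<Gamma>1 \<Gamma>2 R1 R2 A B where a: "R = R1 + R2" "W = TTensor A B" "rty \<Gamma>1 R1 v A" "rty \<Gamma>2 R2 w B"
    by (rule E_pair) blast
  have c: "central A" "central B" using Pair.prems(3) a(2) by (auto elim: CE_tens)
  have vv: "is_val v" "is_val w" using Pair.prems(1) by (auto elim: VE)
  show ?case using Pair.IH(1)[OF vv(1) a(3) c(1)] Pair.IH(2)[OF vv(2) a(4) c(2)] a(1) by simp
next
  case Unit
  then show ?case by (auto elim: rty.cases)
next
  case (Inj1 v)
  from Inj1.prems(2) obtain A B where a: "W = TPlus A B" "rty \<Gamma> R v A" by (rule E_inj1) blast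
  have c: "central A" using Inj1.prems(3) a(1) by (auto elim: CE_plus)
  have vv: "is_val v" using Inj1.prems(1) by (auto elim: VE)
  show ?case using Inj1.IH[OF vv a(2) c] .
next
  case (Inj2 v)
  from Inj2.prems(2) obtain A B where a: "W = TPlus A B" "rty \<Gamma> R v B" by (rule E_inj2) blast
  have c: "central B" using Inj2.prems(3) a(1) by (auto elim: CE_plus)
  have vv: "is_val v" using Inj2.prems(1) by (auto elim: VE)
  show ?case using Inj2.IH[OF vv a(2) c] .
next
  case (Lam x t)
  then show ?case by (auto elim: E_lam CE_other)
next
  case (WPair t u)
  then show ?case by (auto elim: E_wpair CE_other)
next
  case (Res n)
  then show ?case by (auto elim: E_res CE_other)
next
  case (Let p x t u q)
  have "q = Neg" using Let.prems(1) by (auto elim: VE)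
  moreover have "q = polty W" using Let.prems(2) by (auto elim: E_let)
  ultimately show ?case using central_pos[OF Let.prems(3)] by simp
next
  case (DTens v x y t q)
  have "q = Neg" using DTens.prems(1) by (auto elim: VE)
  moreover have "q = polty W" using DTens.prems(2) by (auto elim: E_dtens)
  ultimately show ?case using central_pos[OF DTens.prems(3)] by simp
next
  case (DOne v t q)
  have "q = Neg" using DOne.prems(1) by (auto elim: VE)
  moreover have "q = polty W" using DOne.prems(2) by (auto elim: E_done)
  ultimately show ?case using central_pos[OF DOne.prems(3)] by simp
next
  case (DSum v x t y u q)
  have "q = Neg" using DSum.prems(1) by (auto elim: VE)
  moreover have "q = polty W" using DSum.prems(2) by (auto elim: E_dsum)
  ultimately show ?case using central_pos[OF DSum.prems(3)] by simp
next
  case (App v w q)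
  have "q = Neg" using App.prems(1) by (auto elim: VE)
  moreover have "q = polty W" using App.prems(2) by (auto elim: E_app)
  ultimately show ?case using central_pos[OF App.prems(3)] by simp
next
  case (Proj i v q)
  have "q = Neg" using Proj.prems(1) by (auto elim: VE)
  moreover have "q = polty W" using Proj.prems(2) by (auto elim: E_proj)
  ultimately show ?case using central_pos[OF Proj.prems(3)] by simp
qed

theorem theorem5:
  fixes W :: ty and t v :: tm and l l' :: "nat list" and e :: pol
  assumes "central W"
    and "is_exp t" and "fv t = {}"
    and "typing [] t W"
    and "is_val v"
    and "steps (t, [], l, Pos) (v, [], l', e)"
  shows "\<exists>\<sigma>. \<sigma> permutes {..<length l} \<and> l' = permute_list \<sigma> l"
proof -
  have r: "rty Map.empty {#} t W" using typing_rty[OF assms(4)] by simp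
  have "inv W (mset l) (t, [], l, Pos)"
    by (rule invI[OF r sty_nil]) simp
  then have "inv W (mset l) (v, [], l', e)" by (rule steps_inv[OF assms(6)])
  then obtain A R1 R2 where h: "rty Map.empty R1 v A" "sty W [] A R2" "R1 + R2 + mset l' = mset l"
    by (rule invE)
  have "A = W" "R2 = {#}" using sinv_nil[OF h(2)] by simp_all
  moreover have "R1 = {#}" using val_central[OF assms(5) h(1)] assms(1) calculation by simp
  ultimately have "mset l' = mset l" using h(3) by simp
  then obtain p where "p permutes {..<length l}" "permute_list p l = l'" by (rule mset_eq_permutation)
  then show ?thesis by metis
qed

end
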